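(* Let $n\ge 2$. There is a one-to-one correspondence between the families of spherical simplices generating the reflection group $B_n$ (families considered up to isometry) and the trees with $n$ vertices having exactly one marked vertex (considered up to isomorphism preserving the mark). The correspondence is given as follows: realize the family by normal vectors $\pm f_1,\dots,\pm f_n$ which, suitably normalized, lie in the root system $\Delta(B_n)=\{\pm h_i,\ \pm h_i\pm h_j: 1\le i<j\le n\}$ ($h_1,\dots,h_n$ the standard basis of $\mathbb{R}^n$); the associated graph has vertices $v_1,\dots,v_n$ corresponding to $h_1,\dots,h_n$, $v_i$ and $v_j$ are joined by an edge for each of $\pm(h_i+h_j)$, $\pm(h_i-h_j)$ that occurs among the $f_k$, and $v_i$ is marked iff $\pm h_i$ occurs among the $f_k$. This correspondence is well defined and is a bijection onto the set of trees with $n$ vertices and exactly one marked vertex.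
   Context: A family of spherical simplices in $S^{n-1}$ is the set of $2^n$ simplices cut out by $n$ hyperplanes through the origin in $\mathbb{R}^n$ with linearly independent unit normals $f_1,\dots,f_n$; it is encoded by $\pm f_1,\dots,\pm f_n$. The family generates the group generated by the reflections in the hyperplanes $f_i^\perp$; it generates $B_n$ if this group is the finite Coxeter (Weyl) group of type $B_n$ (up to conjugation by an orthogonal transformation). *)

theory Defs
  imports "HOL-Analysis.Analysis"
begin

definition reflection :: "real^'n \<Rightarrow> real^'n \<Rightarrow> real^'n" where
  "reflection v x = x - (2 * (x \<bullet> v) / (v \<bullet> v)) *\<^sub>R v"

text \<open>The group generated by the reflections in the hyperplanes orthogonal to the
  vectors of S (reflections are involutions, so the generated monoid is the group).\<close>
inductive_set refl_group :: "(real^'n) set \<Rightarrow> (real^'n \<Rightarrow> real^'n) set"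
  for S :: "(real^'n) set" where
  id: "id \<in> refl_group S"
| step: "g \<in> refl_group S \<Longrightarrow> v \<in> S \<Longrightarrow> reflection v \<circ> g \<in> refl_group S"

definition Bn_roots :: "(real^'n) set" where
  "Bn_roots = {a *\<^sub>R axis i (1::real) | i a. a \<in> {1, -1}}
     \<union> {a *\<^sub>R axis i (1::real) + b *\<^sub>R axis j (1::real) | i j a b. i \<noteq> j \<and> a \<in> {1, -1} \<and> b \<in> {1, -1}}"

text \<open>A family is encoded by the set {+-f_1,...,+-f_n} of n linearly independent unit vectors.\<close>
definition simplex_family :: "(real^'n) set \<Rightarrow> bool" where
  "simplex_family F \<longleftrightarrow> (\<exists>f :: 'n \<Rightarrow> real^'n.
      (\<forall>i. norm (f i) = 1) \<and> inj f \<and> independent (range f) \<and>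
      F = range f \<union> uminus ` range f)"

definition generates_Bn :: "(real^'n) set \<Rightarrow> bool" where
  "generates_Bn F \<longleftrightarrow> simplex_family F \<and>
     (\<exists>Q :: real^'n \<Rightarrow> real^'n. orthogonal_transformation Q \<and>
        refl_group F = (\<lambda>g. Q \<circ> g \<circ> inv Q) ` refl_group Bn_roots)"

definition isometric_families :: "(real^'n) set \<Rightarrow> (real^'n) set \<Rightarrow> bool" where
  "isometric_families F F' \<longleftrightarrow> (\<exists>Q. orthogonal_transformation Q \<and> Q ` F = F')"

definition realizes :: "(real^'n) set \<Rightarrow> (real^'n) set \<Rightarrow> bool" where
  "realizes F G \<longleftrightarrow> G \<subseteq> Bn_roots \<and> F = (\<lambda>v. (1 / norm v) *\<^sub>R v) ` G"

definition Bn_edges :: "(real^'n) set \<Rightarrow> 'n \<Rightarrow> 'n \<Rightarrow> nat" where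
  "Bn_edges G i j = (if i = j then 0 else
     card {s :: real. s \<in> {1, -1} \<and>
       (axis i (1::real) + s *\<^sub>R axis j (1::real) \<in> G \<or> - (axis i (1::real) + s *\<^sub>R axis j (1::real)) \<in> G)})"

definition Bn_marked :: "(real^'n) set \<Rightarrow> 'n set" where
  "Bn_marked G = {i. axis i (1::real) \<in> G \<or> - axis i (1::real) \<in> G}"

definition adj :: "('n \<Rightarrow> 'n \<Rightarrow> nat) \<Rightarrow> 'n \<Rightarrow> 'n \<Rightarrow> bool" where
  "adj E i j \<longleftrightarrow> E i j > 0"

definition has_cycle :: "('n \<Rightarrow> 'n \<Rightarrow> nat) \<Rightarrow> bool" where
  "has_cycle E \<longleftrightarrow> (\<exists>vs. length vs \<ge> 3 \<and> distinct vs \<and>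
      (\<forall>k. Suc k < length vs \<longrightarrow> adj E (vs ! k) (vs ! Suc k)) \<and> adj E (last vs) (hd vs))"

definition is_tree :: "('n \<Rightarrow> 'n \<Rightarrow> nat) \<Rightarrow> bool" where
  "is_tree E \<longleftrightarrow> (\<forall>i j. E i j = E j i) \<and> (\<forall>i. E i i = 0) \<and> (\<forall>i j. E i j \<le> 1) \<and>
     (\<forall>i j. (adj E)\<^sup>*\<^sup>* i j) \<and> \<not> has_cycle E"

definition marked_tree_one :: "('n \<Rightarrow> 'n \<Rightarrow> nat) \<Rightarrow> 'n set \<Rightarrow> bool" where
  "marked_tree_one E M \<longleftrightarrow> is_tree E \<and> card M = 1"

definition marked_iso :: "('n \<Rightarrow> 'n \<Rightarrow> nat) \<Rightarrow> 'n set \<Rightarrow> ('n \<Rightarrow> 'n \<Rightarrow> nat) \<Rightarrow> 'n set \<Rightarrow> bool" where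
  "marked_iso E M E' M' \<longleftrightarrow> (\<exists>\<pi>. bij \<pi> \<and> (\<forall>i j. E' (\<pi> i) (\<pi> j) = E i j) \<and> \<pi> ` M = M')"

end

theory Submission
  imports Defs
begin

abbreviation ee :: "'n \<Rightarrow> real^'n" where "ee i \<equiv> axis i (1::real)"

lemma ee_nth: "ee i $ j = (if j = i then 1 else 0)" by (simp add: axis_def)

lemma reflection_nth: "reflection v x $ t = x $ t - (2 * (x \<bullet> v) / (v \<bullet> v)) * v $ t"
  by (simp add: reflection_def)

lemma reflection_scale: "c \<noteq> 0 \<Longrightarrow> reflection (c *\<^sub>R v) = reflection v"
  by (rule ext) (simp add: reflection_def field_simps)

lemma reflection_neg: "reflection (- v) = reflection v"
  using reflection_scale[of "-1" v] by simp

lemma reflection_zero: "reflection 0 = id"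
  by (rule ext) (simp add: reflection_def)

lemma linear_reflection: "linear (reflection v)"
  by (rule linearI) (simp_all add: reflection_def inner_add_left inner_scaleR_left add_divide_distrib algebra_simps scaleR_diff_right)

lemma reflection_invol: "reflection v (reflection v x) = x"
proof (cases "v = 0")
  case True thus ?thesis by (simp add: reflection_zero)
next
  case False
  hence "v \<bullet> v \<noteq> 0" by simp
  thus ?thesis by (simp add: reflection_def inner_diff_left inner_scaleR_left algebra_simps) 
qed

lemma reflection_invol_comp: "reflection v \<circ> reflection v = id"
  by (rule ext) (simp add: reflection_invol)

lemma reflection_norm: "norm (reflection v x) = norm x"
proof (cases "v = 0")
  case True thus ?thesis by (simp add: reflection_zero)
next
  case False
  hence vv: "v \<bullet> v \<noteq> 0" by simp
  have "reflection v x \<bullet> reflection v x = x \<bullet> x"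
    using vv by (simp add: reflection_def inner_diff_left inner_diff_right inner_scaleR_left inner_scaleR_right inner_commute[of v x] field_simps power2_eq_square)
  thus ?thesis by (simp add: norm_eq_sqrt_inner)
qed

lemma orth_reflection: "orthogonal_transformation (reflection v)"
  by (simp add: orthogonal_transformation linear_reflection reflection_norm)

lemma orth_inv_apply: fixes Q :: "real^'n \<Rightarrow> real^'n" shows "orthogonal_transformation Q \<Longrightarrow> Q (inv Q x) = x"
  by (meson orthogonal_transformation_surj surj_f_inv_f)

lemma orth_inv_apply2: fixes Q :: "real^'n \<Rightarrow> real^'n" shows "orthogonal_transformation Q \<Longrightarrow> inv Q (Q x) = x"
  by (meson orthogonal_transformation_inj inv_f_f)

lemma orth_inner: "orthogonal_transformation Q \<Longrightarrow> Q x \<bullet> Q y = x \<bullet> y"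
  by (simp add: orthogonal_transformation_def)

lemma reflection_conj:
  fixes Q :: "real^'n \<Rightarrow> real^'n"
  assumes Q: "orthogonal_transformation Q"
  shows "Q \<circ> reflection v \<circ> inv Q = reflection (Q v)"
proof (rule ext)
  fix x
  have lin: "linear Q" using Q orthogonal_transformation_linear by blast
  have "(Q \<circ> reflection v \<circ> inv Q) x = Q (inv Q x) - (2 * (inv Q x \<bullet> v) / (v \<bullet> v)) *\<^sub>R Q v"
    by (simp add: reflection_def linear_diff[OF lin] linear_scale[OF lin])
  also have "inv Q x \<bullet> v = x \<bullet> Q v" using orth_inner[OF Q, of "inv Q x" v] orth_inv_apply[OF Q] by simp
  also have "v \<bullet> v = Q v \<bullet> Q v" using orth_inner[OF Q] by simp
  finally show "(Q \<circ> reflection v \<circ> inv Q) x = reflection (Q v) x"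
    using orth_inv_apply[OF Q] by (simp add: reflection_def)
qed

definition sp :: "(real^'n \<Rightarrow> real^'n) \<Rightarrow> bool" where
  "sp g \<longleftrightarrow> linear g \<and> (\<forall>i. \<exists>j. g (ee i) = ee j \<or> g (ee i) = - ee j)"

lemma refl_ee: "reflection (ee i) (ee k) = (if k = i then - ee i else ee k)"
  by (simp add: vec_eq_iff reflection_nth inner_axis_axis ee_nth)

lemma refl_ee2:
  assumes "i \<noteq> j" "a \<in> {1,-1}" "b \<in> {1,-1}"
  shows "reflection (a *\<^sub>R ee i + b *\<^sub>R ee j) (ee k) =
    (if k = i then (-a*b) *\<^sub>R ee j else if k = j then (-a*b) *\<^sub>R ee i else ee k)"
proof -
  have a: "a*a = 1" "b*b = 1" using assms by auto
  have vv: "(a *\<^sub>R ee i + b *\<^sub>R ee j) \<bullet> (a *\<^sub>R ee i + b *\<^sub>R ee j) = 2"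
    using assms a by (simp add: inner_add_left inner_add_right inner_axis_axis)
  have kv: "ee k \<bullet> (a *\<^sub>R ee i + b *\<^sub>R ee j) = (if k = i then a else 0) + (if k = j then b else 0)"
    by (simp add: inner_add_right inner_axis_axis)
  show ?thesis
    unfolding vec_eq_iff reflection_nth vv kv
    using assms(1) a by (auto simp: ee_nth algebra_simps)
qed

lemma sp_root: assumes "r \<in> Bn_roots" shows "sp (reflection r)"
proof -
  have lin: "linear (reflection r)" by (rule linear_reflection)
  from assms consider (s) i a where "a \<in> {1,-1}" "r = a *\<^sub>R ee i"
    | (l) i j a b where "i \<noteq> j" "a \<in> {1,-1}" "b \<in> {1,-1}" "r = a *\<^sub>R ee i + b *\<^sub>R ee j"
    unfolding Bn_roots_def by blast
  thus ?thesis
  proof cases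
    case s
    hence "reflection r = reflection (ee i)" using reflection_scale[of a "ee i"] by auto
    thus ?thesis using lin unfolding sp_def by (auto simp: refl_ee)
  next
    case l
    have "-a*b = 1 \<or> -a*b = -1" using l by auto
    thus ?thesis using lin l unfolding sp_def by (auto simp: refl_ee2)
  qed
qed

lemma sp_id: "sp id" unfolding sp_def by (auto intro!: linearI)

lemma sp_comp: assumes "sp g" "sp h" shows "sp (g \<circ> h)"
proof -
  have lg: "linear g" and lh: "linear h" using assms by (auto simp: sp_def)
  have "\<exists>k. (g \<circ> h) (ee i) = ee k \<or> (g \<circ> h) (ee i) = - ee k" for i
  proof -
    obtain j where j: "h (ee i) = ee j \<or> h (ee i) = - ee j" using assms(2) by (auto simp: sp_def)
    obtain k where k: "g (ee j) = ee k \<or> g (ee j) = - ee k" using assms(1) by (auto simp: sp_def)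
    show ?thesis using j k linear_neg[OF lg, of "ee j"] by auto
  qed
  thus ?thesis using assms by (auto simp: sp_def linear_compose)
qed

lemma W_sp: "g \<in> refl_group Bn_roots \<Longrightarrow> sp g"
proof (induction rule: refl_group.induct)
  case id show ?case by (rule sp_id)
next
  case (step g v) thus ?case using sp_comp sp_root by blast
qed

lemma finite_sp: "finite {g :: real^'n \<Rightarrow> real^'n. sp g}"
proof -
  let ?S = "range (ee :: 'n \<Rightarrow> real^'n) \<union> uminus ` range ee"
  let ?phi = "\<lambda>g::real^'n \<Rightarrow> real^'n. \<lambda>i. g (ee i)"
  have fS: "finite ?S" by simp
  have fin: "finite {f. \<forall>x. (x \<in> (UNIV::'n set) \<longrightarrow> f x \<in> ?S) \<and> (x \<notin> UNIV \<longrightarrow> f x = 0)}"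
    by (rule finite_set_of_finite_funs[OF finite fS])
  have "?phi ` {g. sp g} \<subseteq> {f. \<forall>x. (x \<in> (UNIV::'n set) \<longrightarrow> f x \<in> ?S) \<and> (x \<notin> UNIV \<longrightarrow> f x = 0)}"
  proof
    fix f assume "f \<in> ?phi ` {g. sp g}"
    then obtain g where g: "sp g" "f = ?phi g" by blast
    have "f x \<in> ?S" for x
    proof -
      obtain j where "g (ee x) = ee j \<or> g (ee x) = - ee j" using g(1) unfolding sp_def by blast
      thus ?thesis using g(2) by blast
    qed
    thus "f \<in> {f. \<forall>x. (x \<in> (UNIV::'n set) \<longrightarrow> f x \<in> ?S) \<and> (x \<notin> UNIV \<longrightarrow> f x = 0)}" by blast
  qed
  hence f2: "finite (?phi ` {g. sp g})" using fin finite_subset by blast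
  have "inj_on ?phi {g. sp g}"
  proof (rule inj_onI)
    fix g h assume g: "g \<in> {g. sp g}" and h: "h \<in> {g. sp g}" and e: "?phi g = ?phi h"
    show "g = h"
    proof (rule linear_eq_stdbasis)
      show "linear g" "linear h" using g h by (auto simp: sp_def)
      fix b :: "real^'n" assume "b \<in> Basis"
      then obtain i where "b = ee i" by (auto simp: Basis_vec_def)
      thus "g b = h b" using e by metis
    qed
  qed
  thus ?thesis using f2 finite_imageD by blast
qed

lemma finite_W: "finite (refl_group (Bn_roots :: (real^'n) set))"
  using finite_subset[OF _ finite_sp] W_sp by blast

lemma rg_comp: "g \<in> refl_group S \<Longrightarrow> h \<in> refl_group S \<Longrightarrow> g \<circ> h \<in> refl_group S"
proof (induction rule: refl_group.induct)
  case id thus ?case by (simp only: id_comp)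
next
  case (step g v)
  show ?case using refl_group.step[OF step.IH[OF step.prems] step.hyps(2)] by (simp only: comp_assoc)
qed

lemma rg_refl: "v \<in> S \<Longrightarrow> reflection v \<in> refl_group S"
  using refl_group.step[OF refl_group.id] by fastforce

lemma rg_inv: "g \<in> refl_group S \<Longrightarrow> \<exists>h \<in> refl_group S. h \<circ> g = id \<and> g \<circ> h = id"
proof (induction rule: refl_group.induct)
  case id thus ?case by (metis id_comp refl_group.id)
next
  case (step g v)
  then obtain h where h: "h \<in> refl_group S" "h \<circ> g = id" "g \<circ> h = id" by blast
  have "h \<circ> reflection v \<in> refl_group S" using h(1) rg_comp rg_refl step.hyps(2) by blast
  moreover have "(h \<circ> reflection v) \<circ> (reflection v \<circ> g) = id"
    by (metis comp_assoc reflection_invol_comp comp_id h(2))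
  moreover have "(reflection v \<circ> g) \<circ> (h \<circ> reflection v) = id"
    by (metis comp_assoc reflection_invol_comp comp_id h(3))
  ultimately show ?case by blast
qed

lemma rg_orth: "g \<in> refl_group S \<Longrightarrow> orthogonal_transformation g"
proof (induction rule: refl_group.induct)
  case id thus ?case by (simp add: id_def)
next
  case (step g v) thus ?case using orthogonal_transformation_compose orth_reflection by blast
qed

lemma rg_inv_eq: assumes "g \<in> refl_group S" shows "inv g \<in> refl_group S"
proof -
  obtain h where h: "h \<in> refl_group S" "h \<circ> g = id" "g \<circ> h = id" using rg_inv[OF assms] by blast
  have "inv g = h" using h by (simp add: inv_unique_comp)
  thus ?thesis using h by simp
qed

lemma rg_conj: assumes "g \<in> refl_group S" "reflection v \<in> refl_group S"
  shows "reflection (g v) \<in> refl_group S"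
proof -
  have "reflection (g v) = g \<circ> reflection v \<circ> inv g"
    using reflection_conj[OF rg_orth[OF assms(1)]] by simp
  thus ?thesis using assms rg_comp rg_inv_eq by metis
qed

lemma rg_subset: assumes "\<And>v. v \<in> S \<Longrightarrow> reflection v \<in> refl_group T"
  shows "refl_group S \<subseteq> refl_group T"
proof
  fix g assume "g \<in> refl_group S"
  thus "g \<in> refl_group T"
  proof (induction rule: refl_group.induct)
    case id show ?case by (rule refl_group.id)
  next
    case (step g v) thus ?case using rg_comp assms by blast
  qed
qed

lemma rg_image:
  fixes Q :: "real^'n \<Rightarrow> real^'n"
  assumes Q: "orthogonal_transformation Q"
  shows "refl_group (Q ` S) = (\<lambda>g. Q \<circ> g \<circ> inv Q) ` refl_group S"
proof
  have QQ: "Q \<circ> inv Q = id" using orth_inv_apply[OF Q] by (auto simp: fun_eq_iff)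
  show "refl_group (Q ` S) \<subseteq> (\<lambda>g. Q \<circ> g \<circ> inv Q) ` refl_group S"
  proof
    fix g assume "g \<in> refl_group (Q ` S)"
    thus "g \<in> (\<lambda>g. Q \<circ> g \<circ> inv Q) ` refl_group S"
    proof (induction rule: refl_group.induct)
      case id
      have "id = Q \<circ> id \<circ> inv Q" using QQ by simp
      thus ?case using refl_group.id by blast
    next
      case (step g w)
      then obtain g0 v where g0: "g0 \<in> refl_group S" "g = Q \<circ> g0 \<circ> inv Q" and v: "v \<in> S" "w = Q v" by blast
      have "reflection w \<circ> g = Q \<circ> (reflection v \<circ> g0) \<circ> inv Q"
        using reflection_conj[OF Q, of v, symmetric] g0(2) v(2) QQ
        by (simp add: fun_eq_iff orth_inv_apply2[OF Q])
      thus ?case using refl_group.step[OF g0(1) v(1)] by blast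
    qed
  qed
  show "(\<lambda>g. Q \<circ> g \<circ> inv Q) ` refl_group S \<subseteq> refl_group (Q ` S)"
  proof
    fix g assume "g \<in> (\<lambda>g. Q \<circ> g \<circ> inv Q) ` refl_group S"
    then obtain g0 where g0: "g0 \<in> refl_group S" "g = Q \<circ> g0 \<circ> inv Q" by blast
    from g0(1) have "Q \<circ> g0 \<circ> inv Q \<in> refl_group (Q ` S)"
    proof (induction rule: refl_group.induct)
      case id thus ?case by (metis QQ comp_id refl_group.id)
    next
      case (step g v)
      have eq: "Q \<circ> (reflection v \<circ> g) \<circ> inv Q = reflection (Q v) \<circ> (Q \<circ> g \<circ> inv Q)"
        using reflection_conj[OF Q, of v, symmetric] QQ
        by (simp add: fun_eq_iff orth_inv_apply2[OF Q])
      have "Q v \<in> Q ` S" using step.hyps by blast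
      thus ?case using refl_group.step[OF step.IH, of "Q v"] eq by argo
    qed
    thus "g \<in> refl_group (Q ` S)" using g0 by simp
  qed
qed

definition nz :: "real^'n \<Rightarrow> real^'n" where "nz v = (1 / norm v) *\<^sub>R v"

lemma realizes_nz: "realizes F G \<longleftrightarrow> G \<subseteq> Bn_roots \<and> F = nz ` G"
  unfolding realizes_def nz_def by simp

lemma root_cases:
  assumes "r \<in> Bn_roots"
  obtains (s) i a where "a \<in> {1,-1}" "r = a *\<^sub>R ee i"
    | (l) i j a b where "i \<noteq> j" "a \<in> {1,-1}" "b \<in> {1,-1}" "r = a *\<^sub>R ee i + b *\<^sub>R ee j"
proof -
  have "(\<exists>i a. r = a *\<^sub>R ee i \<and> a \<in> {1,-1}) \<or> (\<exists>i j a b. r = a *\<^sub>R ee i + b *\<^sub>R ee j \<and> i \<noteq> j \<and> a \<in> {1,-1} \<and> b \<in> {1,-1})"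
    using assms unfolding Bn_roots_def by (simp only: Un_iff mem_Collect_eq)
  thus ?thesis using that by blast
qed

lemma root_s: "a \<in> {1,-1} \<Longrightarrow> a *\<^sub>R ee i \<in> Bn_roots"
  unfolding Bn_roots_def by (rule UnI1, simp only: mem_Collect_eq) blast

lemma root_l: "i \<noteq> j \<Longrightarrow> a \<in> {1,-1} \<Longrightarrow> b \<in> {1,-1} \<Longrightarrow> a *\<^sub>R ee i + b *\<^sub>R ee j \<in> Bn_roots"
  unfolding Bn_roots_def by (rule UnI2, simp only: mem_Collect_eq) blast

lemma root_neg: assumes "r \<in> Bn_roots" shows "- r \<in> Bn_roots"
  using assms
proof (cases rule: root_cases)
  case (s i a) thus ?thesis using root_s[of "-a" i] by auto
next
  case (l i j a b) thus ?thesis using root_l[of i j "-a" "-b"] by (auto simp: algebra_simps)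
qed

lemma root_comp: assumes "r \<in> Bn_roots" shows "r $ k \<in> {-1,0,1}"
  using assms
proof (cases rule: root_cases)
  case (s i a) thus ?thesis by (auto simp: ee_nth)
next
  case (l i j a b) thus ?thesis by (auto simp: ee_nth)
qed

lemma root_nonzero: assumes "r \<in> Bn_roots" shows "r \<noteq> 0"
  using assms
proof (cases rule: root_cases)
  case (s i a) thus ?thesis by auto
next
  case (l i j a b)
  hence ri: "r $ i = a" by (auto simp: ee_nth)
  show ?thesis
  proof
    assume "r = 0"
    hence "a = 0" using ri by simp
    thus False using l(2) by simp
  qed
qed

lemma nz_neg: "nz (- v) = - nz v" by (simp add: nz_def)

lemma norm_nz: "v \<noteq> 0 \<Longrightarrow> norm (nz v) = 1" by (simp add: nz_def)

lemma nz_inj: assumes r: "r \<in> Bn_roots" and r': "r' \<in> Bn_roots" and e: "nz r = nz r'"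
  shows "r = r'"
proof -
  have n: "norm r > 0" "norm r' > 0" using root_nonzero r r' by auto
  define c where "c = norm r / norm r'"
  have c: "c > 0" using n by (simp add: c_def)
  have rr: "r = c *\<^sub>R r'"
  proof -
    have "(norm r) *\<^sub>R nz r = r" using n by (simp add: nz_def)
    also have "nz r = (1 / norm r') *\<^sub>R r'" using e by (simp add: nz_def)
    finally show ?thesis by (simp add: c_def)
  qed
  obtain k where k: "r' $ k \<noteq> 0" using root_nonzero[OF r'] by (metis vec_eq_iff zero_index)
  have "r $ k = c * r' $ k" using rr by simp
  moreover have "r $ k \<in> {-1,0,1}" "r' $ k \<in> {-1,0,1}" using root_comp r r' by auto
  ultimately have "c = 1" using c k by auto
  thus ?thesis using rr by simp
qed

lemma lemmaR:
  fixes u :: "real^'n"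
  assumes nu: "norm u = 1" and spu: "sp (reflection u)"
  shows "\<exists>r \<in> Bn_roots. u = nz r"
proof -
  have key: "\<exists>r \<in> Bn_roots. u = nz r" if "u = t *\<^sub>R r" "r \<in> Bn_roots" for t r
  proof -
    have rn: "r \<noteq> 0" using root_nonzero that(2) by blast
    have "\<bar>t\<bar> * norm r = 1" using nu that(1) by simp
    hence tt: "\<bar>t\<bar> = 1 / norm r" using rn by (simp add: field_simps)
    show ?thesis
    proof (cases "t \<ge> 0")
      case True thus ?thesis using tt that by (intro bexI[of _ r]) (auto simp: nz_def)
    next
      case False
      hence "t = - (1 / norm r)" using tt by linarith
      thus ?thesis using that root_neg[OF that(2)]
        by (intro bexI[of _ "-r"]) (auto simp: nz_def)
    qed
  qed
  have "u \<noteq> 0" using nu by auto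
  then obtain k where k: "u $ k \<noteq> 0" by (metis vec_eq_iff zero_index)
  define c where "c = u $ k"
  have uu: "u \<bullet> u = 1" using nu by (simp add: norm_eq_1)
  have rk: "reflection u (ee k) = ee k - (2 * c) *\<^sub>R u"
    using uu by (simp add: reflection_def c_def inner_axis')
  obtain j where j: "reflection u (ee k) = ee j \<or> reflection u (ee k) = - ee j"
    using spu unfolding sp_def by blast
  then obtain \<sigma> :: real where sg: "\<sigma> \<in> {1,-1}" "ee k - (2 * c) *\<^sub>R u = \<sigma> *\<^sub>R ee j"
    using rk by (metis insertCI scaleR_minus1_left scaleR_one)
  have c0: "c \<noteq> 0" using k c_def by simp
  have uform: "u = (1 / (2 * c)) *\<^sub>R (ee k - \<sigma> *\<^sub>R ee j)"
  proof -
    have "(2 * c) *\<^sub>R u = ee k - \<sigma> *\<^sub>R ee j" using sg(2) by (simp add: algebra_simps)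
    hence "(1 / (2 * c)) *\<^sub>R ((2 * c) *\<^sub>R u) = (1 / (2 * c)) *\<^sub>R (ee k - \<sigma> *\<^sub>R ee j)" by simp
    thus ?thesis using c0 by simp
  qed
  show ?thesis
  proof (cases "j = k")
    case True
    show ?thesis
    proof (cases "\<sigma> = 1")
      case True
      thus ?thesis using uform \<open>j = k\<close> \<open>u \<noteq> 0\<close> by simp
    next
      case False
      hence "\<sigma> = -1" using sg by auto
      hence "u = (1 / c) *\<^sub>R (1 *\<^sub>R ee k)" using uform \<open>j = k\<close> by (simp add: scaleR_2[symmetric])
      thus ?thesis using key root_s[of 1 k] by blast
    qed
  next
    case False
    have "ee k - \<sigma> *\<^sub>R ee j = 1 *\<^sub>R ee k + (-\<sigma>) *\<^sub>R ee j" by simp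
    moreover have "1 *\<^sub>R ee k + (-\<sigma>) *\<^sub>R ee j \<in> Bn_roots" using root_l[of k j 1 "-\<sigma>"] False sg(1) by auto
    ultimately show ?thesis using key uform by metis
  qed
qed

abbreviation W :: "(real^'n \<Rightarrow> real^'n) set" where "W \<equiv> refl_group Bn_roots"

lemma simplex_norm: assumes "simplex_family F" "v \<in> F" shows "norm v = 1"
  using assms unfolding simplex_family_def by auto

lemma simplex_neg: assumes "simplex_family F" "v \<in> F" shows "- v \<in> F"
  using assms unfolding simplex_family_def by auto

lemma inv_inv_orth: fixes Q :: "real^'n \<Rightarrow> real^'n"
  assumes "orthogonal_transformation Q" shows "inv (inv Q) = Q"
  using assms orthogonal_transformation_bij inv_inv_eq by blast

lemma part1:
  fixes F :: "(real^'n) set"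
  assumes g: "generates_Bn F"
  shows "\<exists>F' G. isometric_families F F' \<and> realizes F' G"
proof -
  obtain Q :: "real^'n \<Rightarrow> real^'n" where Q: "orthogonal_transformation Q"
    and RG: "refl_group F = (\<lambda>g. Q \<circ> g \<circ> inv Q) ` W"
    using g unfolding generates_Bn_def by blast
  have sf: "simplex_family F" using g unfolding generates_Bn_def by blast
  define P where "P = inv Q"
  have P: "orthogonal_transformation P" using Q orthogonal_transformation_inv P_def by blast
  have PQ: "inv P = Q" using inv_inv_orth[OF Q] P_def by simp
  define G where "G = {r \<in> Bn_roots. nz r \<in> P ` F}"
  have "P ` F \<subseteq> nz ` G"
  proof
    fix x assume "x \<in> P ` F"
    then obtain v where v: "v \<in> F" "x = P v" by blast
    have "reflection v \<in> refl_group F" using rg_refl v(1) by blast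
    then obtain w where w: "w \<in> W" "reflection v = Q \<circ> w \<circ> inv Q" using RG by blast
    have "reflection (P v) = P \<circ> reflection v \<circ> inv P" using reflection_conj[OF P] by simp
    also have "\<dots> = inv Q \<circ> (Q \<circ> w \<circ> inv Q) \<circ> Q" using w(2) PQ P_def by simp
    also have "\<dots> = w" using orth_inv_apply2[OF Q] by (simp add: fun_eq_iff)
    finally have "sp (reflection (P v))" using W_sp w(1) by simp
    moreover have "norm (P v) = 1" using simplex_norm[OF sf v(1)] orthogonal_transformation_norm[OF P] by simp
    ultimately obtain r where r: "r \<in> Bn_roots" "P v = nz r" using lemmaR by blast
    have "nz r \<in> P ` F" using r(2) v(1) by force
    hence "r \<in> G" unfolding G_def using r(1) by blast
    thus "x \<in> nz ` G" using v(2) r(2) by blast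
  qed
  hence "realizes (P ` F) G" unfolding realizes_nz G_def by auto
  moreover have "isometric_families F (P ` F)" unfolding isometric_families_def using P by blast
  ultimately show ?thesis by blast
qed

lemma realized_sub_W:
  assumes "realizes F G" shows "refl_group F \<subseteq> W"
proof (rule rg_subset)
  fix v assume "v \<in> F"
  then obtain r where r: "r \<in> Bn_roots" "v = nz r" using assms unfolding realizes_nz by blast
  have "norm r \<noteq> 0" using root_nonzero r(1) by simp
  hence "reflection v = reflection r" using r(2) reflection_scale[of "1 / norm r" r] by (simp add: nz_def)
  thus "reflection v \<in> W" using rg_refl[OF r(1)] by simp
qed

lemma gen_W:
  fixes F :: "(real^'n) set"
  assumes g: "generates_Bn F" and rz: "realizes F G"
  shows "refl_group F = W"
proof -
  obtain Q :: "real^'n \<Rightarrow> real^'n" where Q: "orthogonal_transformation Q"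
    and RG: "refl_group F = (\<lambda>g. Q \<circ> g \<circ> inv Q) ` W"
    using g unfolding generates_Bn_def by blast
  have "inj_on (\<lambda>g. Q \<circ> g \<circ> inv Q) W"
  proof (rule inj_onI)
    fix g h assume e: "Q \<circ> g \<circ> inv Q = Q \<circ> h \<circ> inv Q"
    have "\<And>x. Q (g (inv Q x)) = Q (h (inv Q x))" using e by (simp add: fun_eq_iff)
    hence e2: "\<And>x. g (inv Q x) = h (inv Q x)" using orthogonal_transformation_inj[OF Q] by (simp add: inj_eq)
    have "\<And>y. g y = h y" using e2 orth_inv_apply2[OF Q] by (metis (full_types))
    thus "g = h" by (simp add: fun_eq_iff)
  qed
  hence "card ((\<lambda>g. Q \<circ> g \<circ> inv Q) ` W) = card (W :: (real^'n \<Rightarrow> real^'n) set)" by (simp add: card_image)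
  hence "card (refl_group F) = card (W :: (real^'n \<Rightarrow> real^'n) set)" using RG by simp
  thus ?thesis by (rule card_subset_eq[OF finite_W realized_sub_W[OF rz]])
qed

lemma edge_set_sub: "{s :: real. s \<in> {1, -1} \<and> P s} \<subseteq> {1,-1}" by blast

lemma finite_edge_set: "finite {s :: real. s \<in> {1, -1} \<and> P s}"
  using finite_subset[OF edge_set_sub] by simp

lemma Bn_edges_pos_iff:
  assumes "i \<noteq> j"
  shows "Bn_edges G i j > 0 \<longleftrightarrow> (\<exists>s \<in> {1,-1}. ee i + s *\<^sub>R ee j \<in> G \<or> - (ee i + s *\<^sub>R ee j) \<in> G)"
proof -
  have eq: "Bn_edges G i j = card {s :: real. s \<in> {1, -1} \<and>
       (ee i + s *\<^sub>R ee j \<in> G \<or> - (ee i + s *\<^sub>R ee j) \<in> G)}" using assms by (simp add: Bn_edges_def)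
  show ?thesis unfolding eq card_gt_0_iff
    using finite_edge_set[of "\<lambda>s. ee i + s *\<^sub>R ee j \<in> G \<or> - (ee i + s *\<^sub>R ee j) \<in> G"] by blast
qed

lemma Bn_edges_sym: "Bn_edges G i j = Bn_edges G j i"
proof (cases "i = j")
  case True thus ?thesis by simp
next
  case False
  have "{s :: real. s \<in> {1, -1} \<and> (ee i + s *\<^sub>R ee j \<in> G \<or> - (ee i + s *\<^sub>R ee j) \<in> G)}
      = {s :: real. s \<in> {1, -1} \<and> (ee j + s *\<^sub>R ee i \<in> G \<or> - (ee j + s *\<^sub>R ee i) \<in> G)}"
  proof -
    have "(ee i + s *\<^sub>R ee j \<in> G \<or> - (ee i + s *\<^sub>R ee j) \<in> G) \<longleftrightarrow>
          (ee j + s *\<^sub>R ee i \<in> G \<or> - (ee j + s *\<^sub>R ee i) \<in> G)" if "s \<in> {1,-1}" for s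
    proof -
      from that have "s = 1 \<or> s = -1" by simp
      thus ?thesis
      proof
        assume "s = 1" thus ?thesis by (simp add: add.commute)
      next
        assume s: "s = -1"
        have e1: "ee j + s *\<^sub>R ee i = - (ee i + s *\<^sub>R ee j)" using s by simp
        show ?thesis unfolding e1 minus_minus by blast
      qed
    qed
    thus ?thesis by blast
  qed
  thus ?thesis using False by (simp add: Bn_edges_def)
qed

lemma adj_sym: "adj (Bn_edges G) i j \<Longrightarrow> adj (Bn_edges G) j i"
  unfolding adj_def using Bn_edges_sym by metis

lemma root_support:
  assumes r: "r \<in> G" "G \<subseteq> Bn_roots" and C: "\<And>i j. adj (Bn_edges G) i j \<Longrightarrow> i \<in> C \<Longrightarrow> j \<in> C"
  shows "(\<forall>t. r $ t \<noteq> 0 \<longrightarrow> t \<in> C) \<or> (\<forall>t. r $ t \<noteq> 0 \<longrightarrow> t \<notin> C)"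
proof -
  have "r \<in> Bn_roots" using r by blast
  thus ?thesis
  proof (cases rule: root_cases)
    case (s i a) thus ?thesis by (auto simp: ee_nth)
  next
    case (l i j a b)
    have ab: "a * a = 1" "b * b = 1" using l by auto
    have "r = a *\<^sub>R (ee i + (a * b) *\<^sub>R ee j)" using l(4) ab by (simp add: algebra_simps)
    hence "ee i + (a * b) *\<^sub>R ee j \<in> G \<or> - (ee i + (a * b) *\<^sub>R ee j) \<in> G"
      using r(1) l(2) by auto
    moreover have "a * b \<in> {1,-1}" using l by auto
    ultimately have "Bn_edges G i j > 0" using Bn_edges_pos_iff[OF l(1)] by blast
    hence "adj (Bn_edges G) i j" "adj (Bn_edges G) j i" using adj_sym adj_def by metis+
    hence "i \<in> C \<longleftrightarrow> j \<in> C" using C by blast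
    thus ?thesis using l by (auto simp: ee_nth)
  qed
qed

lemma inner_zero_support:
  fixes x y :: "real^'n"
  assumes "\<And>t. x $ t = 0 \<or> y $ t = 0"
  shows "x \<bullet> y = 0"
  unfolding inner_vec_def using assms by (simp add: sum.neutral)

lemma connected_G:
  fixes F :: "(real^'n) set"
  assumes g: "generates_Bn F" and rz: "realizes F G"
  shows "(adj (Bn_edges G))\<^sup>*\<^sup>* a b"
proof (rule ccontr)
  assume nb: "\<not> (adj (Bn_edges G))\<^sup>*\<^sup>* a b"
  define C where "C = {j. (adj (Bn_edges G))\<^sup>*\<^sup>* a j}"
  have Ccl: "\<And>i j. adj (Bn_edges G) i j \<Longrightarrow> i \<in> C \<Longrightarrow> j \<in> C"
    unfolding C_def by (auto intro: rtranclp.rtrancl_into_rtrancl)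
  have GR: "G \<subseteq> Bn_roots" using rz unfolding realizes_def by blast
  define V where "V = {x :: real^'n. \<forall>t. t \<notin> C \<longrightarrow> x $ t = 0}"
  have inv_r: "reflection r y \<in> V" if "r \<in> G" "y \<in> V" for r y
  proof -
    from root_support[OF that(1) GR Ccl] show ?thesis
    proof
      assume "\<forall>t. r $ t \<noteq> 0 \<longrightarrow> t \<in> C"
      thus ?thesis using that(2) unfolding V_def by (auto simp: reflection_nth)
    next
      assume h: "\<forall>t. r $ t \<noteq> 0 \<longrightarrow> t \<notin> C"
      have "y \<bullet> r = 0" using h that(2) unfolding V_def by (intro inner_zero_support) blast
      thus ?thesis using that(2) by (simp add: reflection_def)
    qed
  qed
  have "\<forall>x \<in> V. g x \<in> V" if "g \<in> refl_group F" for g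
    using that
  proof (induction rule: refl_group.induct)
    case id thus ?case by simp
  next
    case (step g v)
    obtain r where r: "r \<in> G" "v = nz r" using step.hyps(2) rz unfolding realizes_nz by blast
    have "norm r \<noteq> 0" using root_nonzero r(1) GR by auto
    hence "reflection v = reflection r" using r(2) reflection_scale[of "1 / norm r" r] by (simp add: nz_def)
    thus ?case using step.IH inv_r[OF r(1)] by simp
  qed
  moreover have "reflection (1 *\<^sub>R ee a + (-1) *\<^sub>R ee b) \<in> refl_group F"
  proof -
    have "a \<noteq> b" using nb by auto
    hence "1 *\<^sub>R ee a + (-1) *\<^sub>R ee b \<in> Bn_roots" by (intro root_l) auto
    thus ?thesis using gen_W[OF g rz] rg_refl by blast
  qed
  ultimately have "\<forall>x \<in> V. reflection (1 *\<^sub>R ee a + (-1) *\<^sub>R ee b) x \<in> V" by blast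
  moreover have "ee a \<in> V" unfolding V_def C_def by (auto simp: ee_nth)
  moreover have "reflection (1 *\<^sub>R ee a + (-1) *\<^sub>R ee b) (ee a) = ee b"
  proof -
    have "a \<noteq> b" using nb by auto
    thus ?thesis using refl_ee2[of a b 1 "-1" a] by simp
  qed
  moreover have "ee b \<notin> V" using nb unfolding V_def C_def by (auto simp: ee_nth)
  ultimately show False by metis
qed

lemma prod_two:
  fixes f :: "'n::finite \<Rightarrow> real"
  assumes "i \<noteq> j"
  shows "(\<Prod>t\<in>UNIV. f t) = f i * f j * (\<Prod>t\<in>UNIV - {i,j}. f t)"
proof -
  have "(\<Prod>t\<in>UNIV. f t) = f i * (\<Prod>t\<in>UNIV - {i}. f t)" by (simp add: prod.remove)
  also have "(\<Prod>t\<in>UNIV - {i}. f t) = f j * (\<Prod>t\<in>UNIV - {i} - {j}. f t)"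
    using assms by (intro prod.remove) auto
  finally show ?thesis by (simp add: Diff_insert2[symmetric] insert_commute)
qed

lemma mark_exists:
  fixes F :: "(real^'n) set"
  assumes g: "generates_Bn F" and rz: "realizes F G"
  shows "Bn_marked G \<noteq> {}"
proof
  assume nm: "Bn_marked G = {}"
  have GR: "G \<subseteq> Bn_roots" using rz unfolding realizes_def by blast
  define P where "P = (\<lambda>x :: real^'n. \<Prod>t\<in>UNIV. x $ t)"
  have inv_r: "P (reflection r y) = P y" if "r \<in> G" for r y
  proof -
    have "r \<in> Bn_roots" using that GR by blast
    thus ?thesis
    proof (cases rule: root_cases)
      case (s i a)
      hence "ee i \<in> G \<or> - ee i \<in> G" using that by auto
      hence "i \<in> Bn_marked G" unfolding Bn_marked_def by blast
      thus ?thesis using nm by simp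
    next
      case (l i j a b)
      have ab: "a * a = 1" "b * b = 1" using l by auto
      have rr: "r \<bullet> r = 2" using l(1) l(4) ab by (simp add: inner_add_left inner_add_right inner_axis_axis)
      have yr: "y \<bullet> r = a * y $ i + b * y $ j" using l(4) by (simp add: inner_add_right inner_axis)
      have ri: "r $ i = a" "r $ j = b" using l(1) l(4) by (simp_all add: ee_nth)
      have c1: "reflection r y $ i = - (a * b) * y $ j"
        using ab by (simp add: reflection_nth rr yr ri algebra_simps)
      have c2: "reflection r y $ j = - (a * b) * y $ i"
        using ab by (simp add: reflection_nth rr yr ri algebra_simps)
      have c3: "reflection r y $ t = y $ t" if "t \<in> UNIV - {i,j}" for t
        using that l(4) by (simp add: reflection_nth ee_nth)
      have "P (reflection r y) = (- (a * b) * y $ j) * (- (a * b) * y $ i) * (\<Prod>t\<in>UNIV - {i,j}. y $ t)"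
      proof -
        have "(\<Prod>t\<in>UNIV - {i,j}. reflection r y $ t) = (\<Prod>t\<in>UNIV - {i,j}. y $ t)"
          using c3 by (rule prod.cong[OF refl])
        thus ?thesis unfolding P_def prod_two[OF l(1)] c1 c2 by simp
      qed
      also have "\<dots> = y $ i * y $ j * (\<Prod>t\<in>UNIV - {i,j}. y $ t)"
        using ab by (simp add: algebra_simps)
      also have "\<dots> = P y" unfolding P_def prod_two[OF l(1)] by simp
      finally show ?thesis .
    qed
  qed
  have "\<forall>x. P (g x) = P x" if "g \<in> refl_group F" for g
    using that
  proof (induction rule: refl_group.induct)
    case id thus ?case by simp
  next
    case (step g v)
    obtain r where r: "r \<in> G" "v = nz r" using step.hyps(2) rz unfolding realizes_nz by blast
    have "norm r \<noteq> 0" using root_nonzero r(1) GR by auto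
    hence "reflection v = reflection r" using r(2) reflection_scale[of "1 / norm r" r] by (simp add: nz_def)
    thus ?case using step.IH inv_r[OF r(1)] by simp
  qed
  moreover obtain a :: 'n where True by simp
  have "reflection (ee a) \<in> refl_group F"
  proof -
    have "1 *\<^sub>R ee a \<in> Bn_roots" by (intro root_s) auto
    thus ?thesis using gen_W[OF g rz] rg_refl by fastforce
  qed
  ultimately have e: "P (reflection (ee a) (\<chi> t. 1)) = P (\<chi> t. 1)" by blast
  have "P (\<chi> t. 1) = 1" unfolding P_def by simp
  moreover have "P (reflection (ee a) (\<chi> t. 1)) = -1"
  proof -
    have rv: "reflection (ee a) (\<chi> t. 1) $ t = (if t = a then -1 else 1)" for t
      by (simp add: reflection_nth inner_axis ee_nth)
    have "P (reflection (ee a) (\<chi> t. 1)) = (\<Prod>t\<in>UNIV. (if t = a then -1 else 1 :: real))"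
      unfolding P_def rv by simp
    also have "\<dots> = -1" by (simp add: prod.If_cases)
    finally show ?thesis .
  qed
  ultimately show False using e by simp
qed

definition tstruct :: "'n \<Rightarrow> ('n \<Rightarrow> 'n) \<Rightarrow> ('n \<Rightarrow> nat) \<Rightarrow> bool" where
  "tstruct m p d \<longleftrightarrow> p m = m \<and> d m = 0 \<and> (\<forall>v. v \<noteq> m \<longrightarrow> d v = Suc (d (p v)))"

lemma tstruct_d0: "tstruct m p d \<Longrightarrow> d v = 0 \<longleftrightarrow> v = m"
  unfolding tstruct_def by (cases "v = m") auto

lemma tstruct_pne: "tstruct m p d \<Longrightarrow> v \<noteq> m \<Longrightarrow> p v \<noteq> v"
proof
  assume "tstruct m p d" "v \<noteq> m" "p v = v"
  hence "d v = Suc (d v)" unfolding tstruct_def by metis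
  thus False by simp
qed

lemma bfs:
  assumes conn: "\<And>j. R\<^sup>*\<^sup>* m j"
  shows "\<exists>p d. tstruct m p d \<and> (\<forall>v. v \<noteq> m \<longrightarrow> R (p v) v)"
proof -
  define d where "d v = (LEAST k. (R ^^ k) m v)" for v
  have dR: "(R ^^ d v) m v" for v
  proof -
    have "\<exists>k. (R ^^ k) m v" by (rule rtranclp_imp_relpowp[OF conn[of v]])
    thus ?thesis unfolding d_def by (rule LeastI_ex)
  qed
  have dle: "(R ^^ k) m v \<Longrightarrow> d v \<le> k" for k v
    unfolding d_def by (rule Least_le)
  have d0: "d m = 0" using dle[of 0 m] by simp
  define p where "p v = (if v = m then m else SOME u. (R ^^ (d v - 1)) m u \<and> R u v)" for v
  have pv: "(R ^^ (d v - 1)) m (p v) \<and> R (p v) v \<and> d v = Suc (d (p v))" if "v \<noteq> m" for v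
  proof -
    have "d v \<noteq> 0"
    proof
      assume "d v = 0"
      hence "(R ^^ 0) m v" using dR[of v] by simp
      hence "m = v" by simp
      thus False using that by simp
    qed
    then obtain k where k: "d v = Suc k" using not0_implies_Suc by blast
    have "(R ^^ Suc k) m v" using dR[of v] k by simp
    then obtain u where "(R ^^ k) m u" "R u v" by (rule relpowp_Suc_E)
    hence "\<exists>u. (R ^^ (d v - 1)) m u \<and> R u v" using k by auto
    hence h: "(R ^^ (d v - 1)) m (p v) \<and> R (p v) v" unfolding p_def using that someI_ex
      by (simp only: if_False)
    hence h1: "(R ^^ k) m (p v)" and h2: "R (p v) v" using k by auto
    have "d (p v) \<le> k" using dle[OF h1] .
    moreover have "d v \<le> Suc (d (p v))" using dle[OF relpowp_Suc_I[OF dR[of "p v"] h2]] .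
    ultimately show ?thesis using h k by simp
  qed
  have "tstruct m p d" unfolding tstruct_def using d0 pv by (simp add: p_def)
  thus ?thesis using pv by blast
qed

lemma anc_d: assumes "tstruct m p d" shows "d ((p ^^ k) v) = d v - k"
proof (induction k)
  case 0 thus ?case by simp
next
  case (Suc k)
  show ?case
  proof (cases "(p ^^ k) v = m")
    case True
    hence "d v - k = 0" using Suc assms unfolding tstruct_def by simp
    thus ?thesis using True assms unfolding tstruct_def by simp
  next
    case False
    hence "d ((p ^^ k) v) = Suc (d (p ((p ^^ k) v)))" using assms unfolding tstruct_def by blast
    thus ?thesis using Suc by simp
  qed
qed

lemma anc_m: assumes "tstruct m p d" shows "(p ^^ k) v = m \<longleftrightarrow> d v \<le> k"
  using anc_d[OF assms, of k v] tstruct_d0[OF assms, of "(p ^^ k) v"] by simp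

lemma path_to_root:
  assumes t: "tstruct m p d" and e: "\<And>v. v \<noteq> m \<Longrightarrow> R (p v) v"
  shows "R\<^sup>*\<^sup>* m v"
proof (induction "d v" arbitrary: v rule: less_induct)
  case less
  show ?case
  proof (cases "v = m")
    case True thus ?thesis by simp
  next
    case False
    hence "d (p v) < d v" using t unfolding tstruct_def by simp
    hence "R\<^sup>*\<^sup>* m (p v)" using less by blast
    thus ?thesis using e[OF False] by (rule rtranclp.rtrancl_into_rtrancl)
  qed
qed

lemma two_eq:
  fixes a b c e :: real
  assumes ij: "i \<noteq> j" and kl: "k \<noteq> l" and nz: "a \<noteq> 0" "b \<noteq> 0" "c \<noteq> 0" "e \<noteq> 0"
    and eq: "a *\<^sub>R ee i + b *\<^sub>R ee j = c *\<^sub>R ee k + e *\<^sub>R ee l"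
  shows "(i = k \<and> j = l \<and> a = c \<and> b = e) \<or> (i = l \<and> j = k \<and> a = e \<and> b = c)"
proof -
  have ci: "a = (if i = k then c else 0) + (if i = l then e else 0)"
    using arg_cong[OF eq, of "\<lambda>x. x $ i"] ij by (simp add: ee_nth)
  have cj: "b = (if j = k then c else 0) + (if j = l then e else 0)"
    using arg_cong[OF eq, of "\<lambda>x. x $ j"] ij by (simp add: ee_nth)
  have ck: "(if k = i then a else 0) + (if k = j then b else 0) = c"
    using arg_cong[OF eq, of "\<lambda>x. x $ k"] kl by (auto simp: ee_nth split: if_splits)
  have cl: "(if l = i then a else 0) + (if l = j then b else 0) = e"
    using arg_cong[OF eq, of "\<lambda>x. x $ l"] kl by (auto simp: ee_nth split: if_splits)
  show ?thesis using ci cj ck cl ij kl nz by (auto split: if_splits)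
qed

lemma one_two:
  fixes a b c :: real
  assumes ij: "i \<noteq> j" and nz: "b \<noteq> 0" "c \<noteq> 0"
  shows "a *\<^sub>R ee k \<noteq> b *\<^sub>R ee i + c *\<^sub>R ee j"
proof
  assume eq: "a *\<^sub>R ee k = b *\<^sub>R ee i + c *\<^sub>R ee j"
  have "(if i = k then a else 0) = b"
    using arg_cong[OF eq, of "\<lambda>x. x $ i"] ij by (auto simp: ee_nth split: if_splits)
  moreover have "(if j = k then a else 0) = c"
    using arg_cong[OF eq, of "\<lambda>x. x $ j"] ij by (auto simp: ee_nth split: if_splits)
  ultimately show False using ij nz by (auto split: if_splits)
qed

lemma one_one:
  fixes a b :: real
  assumes "a \<noteq> 0"
  shows "a *\<^sub>R ee k = b *\<^sub>R ee i \<longleftrightarrow> k = i \<and> a = b"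
proof
  assume eq: "a *\<^sub>R ee k = b *\<^sub>R ee i"
  have "a = (if k = i then b else 0)" using arg_cong[OF eq, of "\<lambda>x. x $ k"] by (simp add: ee_nth)
  thus "k = i \<and> a = b" using assms by (auto split: if_splits)
qed auto

definition Bset :: "'n \<Rightarrow> ('n \<Rightarrow> 'n) \<Rightarrow> ('n \<Rightarrow> real) \<Rightarrow> (real^'n) set" where
  "Bset m p s = insert (ee m) ((\<lambda>v. ee (p v) + s v *\<^sub>R ee v) ` (UNIV - {m}))"

lemma span_Bset:
  assumes t: "tstruct m p d" and s: "\<And>v. s v \<in> {1,-1}"
  shows "span (Bset m p s) = UNIV"
proof -
  have "ee v \<in> span (Bset m p s)" for v
  proof (induction "d v" arbitrary: v rule: less_induct)
    case less
    show ?case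
    proof (cases "v = m")
      case True thus ?thesis by (simp add: Bset_def span_base)
    next
      case False
      hence "d (p v) < d v" using t unfolding tstruct_def by simp
      hence ih: "ee (p v) \<in> span (Bset m p s)" using less by blast
      have b: "ee (p v) + s v *\<^sub>R ee v \<in> span (Bset m p s)"
        using False by (intro span_base) (auto simp: Bset_def)
      have ss: "s v * s v = 1" using s[of v] by auto
      have "ee v = s v *\<^sub>R ((ee (p v) + s v *\<^sub>R ee v) - ee (p v))" using ss by (simp add: algebra_simps)
      thus ?thesis using span_scale span_diff b ih by metis
    qed
  qed
  hence "Basis \<subseteq> span (Bset m p s)" by (auto simp: Basis_vec_def)
  hence "span Basis \<subseteq> span (Bset m p s)" by (rule span_minimal[OF _ subspace_span])
  thus ?thesis by auto
qed

lemma finite_Bset: "finite (Bset (m::'n::finite) p s)"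
  unfolding Bset_def by simp

lemma neg_closed_H: fixes G :: "(real^'n) set" assumes "x \<in> G \<union> uminus ` G" shows "- x \<in> G \<union> uminus ` G"
proof -
  from assms consider "x \<in> G" | y where "y \<in> G" "x = - y" by blast
  thus ?thesis
  proof cases
    case 1 thus ?thesis by blast
  next
    case 2 thus ?thesis by simp
  qed
qed

lemma Gstructure:
  fixes F :: "(real^'n) set"
  assumes g: "generates_Bn F" and rz: "realizes F G"
  shows "\<exists>m p d s. tstruct m p d \<and> (\<forall>v. s v \<in> {1,-1}) \<and>
           G \<union> uminus ` G = Bset m p s \<union> uminus ` Bset m p s"
proof -
  obtain m where m: "m \<in> Bn_marked G" using mark_exists[OF g rz] by blast
  obtain p d where t: "tstruct m p d" and pe: "\<And>v. v \<noteq> m \<Longrightarrow> adj (Bn_edges G) (p v) v"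
    using bfs[of "adj (Bn_edges G)" m] connected_G[OF g rz] by blast
  define H where "H = G \<union> uminus ` G"
  have Hneg: "x \<in> H \<Longrightarrow> - x \<in> H" for x unfolding H_def by (rule neg_closed_H)
  have inH: "x \<in> H" if "x \<in> G \<or> - x \<in> G" for x
  proof -
    from that consider "x \<in> G" | "- x \<in> G" by blast
    thus ?thesis
    proof cases
      case 1 thus ?thesis unfolding H_def by blast
    next
      case 2 hence "- (- x) \<in> uminus ` G" by blast
      thus ?thesis unfolding H_def by simp
    qed
  qed
  have ex_s: "\<exists>s. s \<in> {1,-1} \<and> ee (p v) + s *\<^sub>R ee v \<in> H" if "v \<noteq> m" for v
  proof -
    have "p v \<noteq> v" using tstruct_pne[OF t that] .
    moreover have "Bn_edges G (p v) v > 0" using pe[OF that] unfolding adj_def .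
    ultimately show ?thesis using Bn_edges_pos_iff inH by blast
  qed
  define s where "s v = (if v = m then 1 else SOME s. s \<in> {1,-1} \<and> ee (p v) + s *\<^sub>R ee v \<in> H)" for v
  have s1: "s v \<in> {1,-1}" for v
  proof (cases "v = m")
    case True thus ?thesis by (simp add: s_def)
  next
    case False
    from someI_ex[OF ex_s[OF False]] show ?thesis using False by (simp add: s_def)
  qed
  have s2: "ee (p v) + s v *\<^sub>R ee v \<in> H" if "v \<noteq> m" for v
    using someI_ex[OF ex_s[OF that]] that by (simp add: s_def)
  define B where "B = Bset m p s"
  have BH: "B \<subseteq> H"
  proof
    fix x assume "x \<in> B"
    then consider "x = ee m" | v where "v \<noteq> m" "x = ee (p v) + s v *\<^sub>R ee v" unfolding B_def Bset_def by blast
    thus "x \<in> H"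
    proof cases
      case 1 thus ?thesis using m inH unfolding Bn_marked_def by blast
    next
      case 2 thus ?thesis using s2 by blast
    qed
  qed
  have BH2: "B \<union> uminus ` B \<subseteq> H" using BH Hneg by auto
  have GR: "G \<subseteq> Bn_roots" using rz unfolding realizes_def by blast
  have HR: "H \<subseteq> Bn_roots" unfolding H_def using GR root_neg by auto
  have sf: "simplex_family F" using g unfolding generates_Bn_def by blast
  then obtain f :: "'n \<Rightarrow> real^'n" where f1: "\<forall>i. norm (f i) = 1" and f2: "inj f"
    and f3: "independent (range f)" and f4: "F = range f \<union> uminus ` range f"
    unfolding simplex_family_def by blast
  have FG: "F = nz ` G" using rz unfolding realizes_nz by blast
  have nzH: "nz x \<in> F" if "x \<in> H" for x
  proof -
    from that consider "x \<in> G" | y where "y \<in> G" "x = - y" unfolding H_def by blast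
    thus ?thesis
    proof cases
      case 1 thus ?thesis using FG by blast
    next
      case 2
      have "nz y \<in> F" using 2 FG by blast
      thus ?thesis using 2 simplex_neg[OF sf] nz_neg by metis
    qed
  qed
  have spanB: "span B = UNIV" unfolding B_def using span_Bset[OF t] s1 by blast
  have Bnz: "x \<in> B \<Longrightarrow> x \<noteq> 0" for x using BH HR root_nonzero by blast
  have spanN: "span (nz ` B) = UNIV"
  proof -
    have "span ((\<lambda>x. (1 / norm x) *\<^sub>R x) ` B) = span B"
      using Bnz by (intro span_image_scale) (auto simp: B_def finite_Bset)
    thus ?thesis using spanB unfolding nz_def by simp
  qed
  have "H \<subseteq> B \<union> uminus ` B"
  proof
    fix r assume rH: "r \<in> H"
    show "r \<in> B \<union> uminus ` B"
    proof (rule ccontr)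
      assume nr: "r \<notin> B \<union> uminus ` B"
      have "nz r \<in> F" using nzH rH by blast
      then obtain k where k: "nz r = f k \<or> nz r = - f k" using f4 by blast
      have c1: "f k \<noteq> nz b \<and> f k \<noteq> - nz b" if "b \<in> B" for b
      proof -
        have bR: "b \<in> Bn_roots" "- b \<in> Bn_roots" using that BH HR root_neg by auto
        have rR: "r \<in> Bn_roots" using rH HR by blast
        have "nz r = nz b \<or> nz r = nz (- b)" if "f k = nz b \<or> f k = - nz b"
          using k that nz_neg[of b] by auto
        hence "r = b \<or> r = - b" if "f k = nz b \<or> f k = - nz b"
          using that nz_inj[OF rR bR(1)] nz_inj[OF rR bR(2)] by blast
        moreover have "r \<noteq> b" "r \<noteq> - b" using nr \<open>b \<in> B\<close> by auto
        ultimately show ?thesis by blast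
      qed
      have "nz ` B \<subseteq> span (range f - {f k})"
      proof
        fix y assume "y \<in> nz ` B"
        then obtain b where b: "b \<in> B" "y = nz b" by blast
        have "nz b \<in> F" using nzH BH b(1) by blast
        then obtain j where j: "nz b = f j \<or> nz b = - f j" using f4 by blast
        have "f j \<noteq> f k" using c1[OF b(1)] j by auto
        hence fj: "f j \<in> span (range f - {f k})" by (intro span_base) auto
        show "y \<in> span (range f - {f k})" using j b(2) fj span_neg by metis
      qed
      hence "span (nz ` B) \<subseteq> span (range f - {f k})" by (rule span_minimal[OF _ subspace_span])
      hence "f k \<in> span (range f - {f k})" using spanN by auto
      hence "dependent (range f)" unfolding dependent_def by blast
      thus False using f3 by blast
    qed
  qed
  hence "H = B \<union> uminus ` B" using BH2 by blast
  thus ?thesis using t s1 unfolding H_def B_def by blast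
qed

definition PG :: "'n \<Rightarrow> ('n \<Rightarrow> 'n) \<Rightarrow> 'n \<Rightarrow> 'n \<Rightarrow> nat" where
  "PG m p i j = (if (i \<noteq> m \<and> j = p i) \<or> (j \<noteq> m \<and> i = p j) then 1 else 0)"

lemma memH: fixes G :: "(real^'n) set" shows "x \<in> G \<union> uminus ` G \<longleftrightarrow> x \<in> G \<or> - x \<in> G"
proof
  assume "x \<in> G \<union> uminus ` G"
  then consider "x \<in> G" | y where "y \<in> G" "x = - y" by blast
  thus "x \<in> G \<or> - x \<in> G" by cases auto
next
  assume "x \<in> G \<or> - x \<in> G"
  then consider "x \<in> G" | "- x \<in> G" by blast
  thus "x \<in> G \<union> uminus ` G"
  proof cases
    case 2 hence "- (- x) \<in> uminus ` G" by blast
    thus ?thesis by simp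
  qed simp
qed

lemma memH2: fixes G :: "(real^'n) set"
  shows "(x \<in> G \<union> uminus ` G \<or> - x \<in> G \<union> uminus ` G) \<longleftrightarrow> (x \<in> G \<or> - x \<in> G)"
  using memH[of x G] memH[of "-x" G] by auto

lemma edges_H: fixes G :: "(real^'n) set" shows "Bn_edges (G \<union> uminus ` G) = Bn_edges G"
  by (intro ext) (simp only: Bn_edges_def memH2)

lemma marked_H: fixes G :: "(real^'n) set" shows "Bn_marked (G \<union> uminus ` G) = Bn_marked G"
  by (simp only: Bn_marked_def memH2)

lemma ee_scale1: "ee i = 1 *\<^sub>R ee i" by simp

lemma memB_mark:
  assumes t: "tstruct m p d" and s: "\<And>v. s v \<in> {1,-1}"
  shows "(ee i \<in> Bset m p s \<or> - ee i \<in> Bset m p s) \<longleftrightarrow> i = m"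
proof
  assume "i = m" thus "ee i \<in> Bset m p s \<or> - ee i \<in> Bset m p s" by (simp add: Bset_def)
next
  assume h: "ee i \<in> Bset m p s \<or> - ee i \<in> Bset m p s"
  obtain a :: real where a: "a \<in> {1,-1}" "a *\<^sub>R ee i \<in> Bset m p s"
  proof -
    from h consider "ee i \<in> Bset m p s" | "- ee i \<in> Bset m p s" by blast
    thus ?thesis
    proof cases
      case 1 thus ?thesis using that[of 1] by simp
    next
      case 2 thus ?thesis using that[of "-1"] by simp
    qed
  qed
  hence "a *\<^sub>R ee i = 1 *\<^sub>R ee m \<or> (\<exists>v. v \<noteq> m \<and> a *\<^sub>R ee i = 1 *\<^sub>R ee (p v) + s v *\<^sub>R ee v)"
    unfolding Bset_def by (simp only: insert_iff image_iff scaleR_one) blast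
  thus "i = m"
  proof
    assume "a *\<^sub>R ee i = 1 *\<^sub>R ee m"
    thus "i = m" using one_one[of a i 1 m] a(1) by auto
  next
    assume "\<exists>v. v \<noteq> m \<and> a *\<^sub>R ee i = 1 *\<^sub>R ee (p v) + s v *\<^sub>R ee v"
    then obtain v where v: "v \<noteq> m" "a *\<^sub>R ee i = 1 *\<^sub>R ee (p v) + s v *\<^sub>R ee v" by blast
    have "p v \<noteq> v" using tstruct_pne[OF t v(1)] .
    moreover have "s v \<noteq> 0" using s[of v] by auto
    ultimately show "i = m" using one_two[of "p v" v 1 "s v" a i] v(2) by simp
  qed
qed

lemma marked_B:
  assumes t: "tstruct m p d" and s: "\<And>v. s v \<in> {1,-1}"
  shows "Bn_marked (Bset m p s \<union> uminus ` Bset m p s) = {m}"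
proof (intro set_eqI)
  fix i
  show "i \<in> Bn_marked (Bset m p s \<union> uminus ` Bset m p s) \<longleftrightarrow> i \<in> {m}"
    unfolding marked_H by (simp only: Bn_marked_def mem_Collect_eq memB_mark[OF t s] singleton_iff)
qed

lemma memB_edge:
  assumes t: "tstruct m p d" and s: "\<And>v. s v \<in> {1,-1}" and ij: "i \<noteq> j" and tt: "c \<in> {1,-1}"
  shows "(ee i + c *\<^sub>R ee j \<in> Bset m p s \<or> - (ee i + c *\<^sub>R ee j) \<in> Bset m p s) \<longleftrightarrow>
         ((j \<noteq> m \<and> i = p j \<and> c = s j) \<or> (i \<noteq> m \<and> j = p i \<and> c = s i))"
proof
  assume h: "ee i + c *\<^sub>R ee j \<in> Bset m p s \<or> - (ee i + c *\<^sub>R ee j) \<in> Bset m p s"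
  obtain a :: real where a: "a \<in> {1,-1}" "a *\<^sub>R ee i + (a * c) *\<^sub>R ee j \<in> Bset m p s"
  proof -
    have e1: "ee i + c *\<^sub>R ee j = 1 *\<^sub>R ee i + (1 * c) *\<^sub>R ee j" by simp
    have e2: "- (ee i + c *\<^sub>R ee j) = (-1) *\<^sub>R ee i + ((-1) * c) *\<^sub>R ee j" by simp
    from h consider "ee i + c *\<^sub>R ee j \<in> Bset m p s" | "- (ee i + c *\<^sub>R ee j) \<in> Bset m p s" by blast
    thus ?thesis
    proof cases
      case 1
      have "1 *\<^sub>R ee i + (1 * c) *\<^sub>R ee j \<in> Bset m p s" using 1 unfolding e1 .
      thus ?thesis by (rule that[rotated]) simp
    next
      case 2
      have "(-1) *\<^sub>R ee i + ((-1) * c) *\<^sub>R ee j \<in> Bset m p s" using 2 unfolding e2 .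
      thus ?thesis by (rule that[rotated]) simp
    qed
  qed
  have ac: "a \<noteq> 0" "a * c \<noteq> 0" using a(1) tt by auto
  have "a *\<^sub>R ee i + (a * c) *\<^sub>R ee j = 1 *\<^sub>R ee m \<or>
     (\<exists>v. v \<noteq> m \<and> a *\<^sub>R ee i + (a * c) *\<^sub>R ee j = 1 *\<^sub>R ee (p v) + s v *\<^sub>R ee v)"
    using a(2) unfolding Bset_def by (simp only: insert_iff image_iff scaleR_one) blast
  thus "(j \<noteq> m \<and> i = p j \<and> c = s j) \<or> (i \<noteq> m \<and> j = p i \<and> c = s i)"
  proof
    assume "a *\<^sub>R ee i + (a * c) *\<^sub>R ee j = 1 *\<^sub>R ee m"
    thus ?thesis using one_two[OF ij ac, of 1 m] by simp
  next
    assume "\<exists>v. v \<noteq> m \<and> a *\<^sub>R ee i + (a * c) *\<^sub>R ee j = 1 *\<^sub>R ee (p v) + s v *\<^sub>R ee v"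
    then obtain v where v: "v \<noteq> m" "a *\<^sub>R ee i + (a * c) *\<^sub>R ee j = 1 *\<^sub>R ee (p v) + s v *\<^sub>R ee v" by blast
    have pv: "p v \<noteq> v" using tstruct_pne[OF t v(1)] .
    have sv: "s v \<noteq> 0" using s[of v] by auto
    from two_eq[OF ij pv ac _ sv v(2)]
    have "(i = p v \<and> j = v \<and> a = 1 \<and> a * c = s v) \<or> (i = v \<and> j = p v \<and> a = s v \<and> a * c = 1)" by simp
    thus ?thesis
    proof
      assume "i = p v \<and> j = v \<and> a = 1 \<and> a * c = s v"
      thus ?thesis using v(1) by auto
    next
      assume h2: "i = v \<and> j = p v \<and> a = s v \<and> a * c = 1"
      have "c = s v" using h2 a(1) tt by auto
      thus ?thesis using h2 v(1) by auto
    qed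
  qed
next
  assume "(j \<noteq> m \<and> i = p j \<and> c = s j) \<or> (i \<noteq> m \<and> j = p i \<and> c = s i)"
  thus "ee i + c *\<^sub>R ee j \<in> Bset m p s \<or> - (ee i + c *\<^sub>R ee j) \<in> Bset m p s"
  proof
    assume h: "j \<noteq> m \<and> i = p j \<and> c = s j"
    hence "ee (p j) + s j *\<^sub>R ee j \<in> Bset m p s" unfolding Bset_def by blast
    thus ?thesis using h by simp
  next
    assume h: "i \<noteq> m \<and> j = p i \<and> c = s i"
    hence b: "ee (p i) + s i *\<^sub>R ee i \<in> Bset m p s" unfolding Bset_def by blast
    have "c = 1 \<or> c = -1" using tt by auto
    thus ?thesis
    proof
      assume "c = 1"
      hence "ee (p i) + s i *\<^sub>R ee i = ee i + c *\<^sub>R ee j" using h by (simp add: add.commute)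
      thus ?thesis using b by simp
    next
      assume "c = -1"
      hence "ee (p i) + s i *\<^sub>R ee i = - (ee i + c *\<^sub>R ee j)" using h by simp
      thus ?thesis using b by simp
    qed
  qed
qed

lemma tstruct_not_both:
  assumes t: "tstruct m p d" and "j \<noteq> m" "i = p j" "i \<noteq> m" "j = p i"
  shows False
proof -
  have h: "\<forall>v. v \<noteq> m \<longrightarrow> d v = Suc (d (p v))" using t unfolding tstruct_def by blast
  have "d j = Suc (d (p j))" using h assms(2) by blast
  moreover have "d i = Suc (d (p i))" using h assms(4) by blast
  ultimately have "d j = Suc (d i)" "d i = Suc (d j)" using assms(3)[symmetric] assms(5)[symmetric] by simp_all
  thus False by simp
qed

lemma edges_B:
  assumes t: "tstruct m p d" and s: "\<And>v. s v \<in> {1,-1}"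
  shows "Bn_edges (Bset m p s \<union> uminus ` Bset m p s) = PG m p"
proof (intro ext)
  fix i j
  show "Bn_edges (Bset m p s \<union> uminus ` Bset m p s) i j = PG m p i j"
  proof (cases "i = j")
    case True
    have nn: "\<not> (j \<noteq> m \<and> j = p j)"
    proof
      assume h: "j \<noteq> m \<and> j = p j"
      hence "p j \<noteq> j" using tstruct_pne[OF t] by blast
      thus False using h by argo
    qed
    have "PG m p i j = 0" unfolding PG_def using True nn by auto
    thus ?thesis using True by (simp add: Bn_edges_def)
  next
    case False
    let ?S = "{c :: real. c \<in> {1, -1} \<and> (ee i + c *\<^sub>R ee j \<in> Bset m p s \<or> - (ee i + c *\<^sub>R ee j) \<in> Bset m p s)}"
    have e: "Bn_edges (Bset m p s \<union> uminus ` Bset m p s) i j = card ?S"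
      unfolding edges_H using False by (simp add: Bn_edges_def)
    have S: "?S = {c. c \<in> {1,-1} \<and> ((j \<noteq> m \<and> i = p j \<and> c = s j) \<or> (i \<noteq> m \<and> j = p i \<and> c = s i))}"
    proof (intro set_eqI)
      fix c :: real
      show "c \<in> ?S \<longleftrightarrow> c \<in> {c. c \<in> {1,-1} \<and> ((j \<noteq> m \<and> i = p j \<and> c = s j) \<or> (i \<noteq> m \<and> j = p i \<and> c = s i))}"
      proof (cases "c \<in> {1,-1}")
        case True
        show ?thesis unfolding mem_Collect_eq memB_edge[OF t s False True] by simp
      qed simp
    qed
    show ?thesis
    proof (cases "j \<noteq> m \<and> i = p j")
      case True
      hence "\<not> (i \<noteq> m \<and> j = p i)" using tstruct_not_both[OF t] by blast
      hence "?S = {s j}" unfolding S using True s[of j] by auto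
      thus ?thesis using e True by (simp add: PG_def)
    next
      case F1: False
      show ?thesis
      proof (cases "i \<noteq> m \<and> j = p i")
        case True
        hence "?S = {s i}" unfolding S using F1 s[of i] by auto
        thus ?thesis using e True by (simp add: PG_def)
      next
        case False
        hence "?S = {}" unfolding S using F1 by auto
        hence c0: "card ?S = 0" by (simp only: card.empty)
        have "PG m p i j = 0" unfolding PG_def using False F1 by simp
        thus ?thesis using e c0 by simp
      qed
    qed
  qed
qed

lemma PG_sym: "PG m p i j = PG m p j i"
  unfolding PG_def by (simp only: disj_commute)

lemma PG_adj: "adj (PG m p) u w \<Longrightarrow> (u \<noteq> m \<and> w = p u) \<or> (w \<noteq> m \<and> u = p w)"
  unfolding adj_def PG_def by (simp split: if_splits)

lemma adj_PG_parent: "v \<noteq> m \<Longrightarrow> adj (PG m p) (p v) v"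
  unfolding adj_def PG_def by simp

lemma rtranclp_sym:
  assumes sym: "\<And>a b. R a b \<Longrightarrow> R b a" and "R\<^sup>*\<^sup>* x y" shows "R\<^sup>*\<^sup>* y x"
  using assms(2)
proof (induction rule: rtranclp_induct)
  case base thus ?case by simp
next
  case (step y z)
  have "R z y" using sym step.hyps(2) .
  thus ?case using step.IH by (rule converse_rtranclp_into_rtranclp)
qed

lemma PG_no_cycle:
  assumes t: "tstruct m p d"
  shows "\<not> has_cycle (PG m p)"
proof
  assume "has_cycle (PG m p)"
  then obtain vs where L3: "length vs \<ge> 3" and dist: "distinct vs"
    and cons: "\<forall>k. Suc k < length vs \<longrightarrow> adj (PG m p) (vs ! k) (vs ! Suc k)"
    and lh: "adj (PG m p) (last vs) (hd vs)"
    unfolding has_cycle_def by blast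
  define L where "L = length vs"
  have ne: "vs \<noteq> []" using L3 by auto
  define nx where "nx k = (if Suc k < L then Suc k else 0)" for k
  have cyc: "adj (PG m p) (vs ! k) (vs ! nx k)" if "k < L" for k
  proof (cases "Suc k < L")
    case True thus ?thesis using cons unfolding nx_def L_def by simp
  next
    case False
    hence "k = L - 1" using that by simp
    hence "vs ! k = last vs" using ne by (simp add: L_def last_conv_nth)
    moreover have "vs ! nx k = hd vs" using False ne by (simp add: nx_def hd_conv_nth)
    ultimately show ?thesis using lh by simp
  qed
  define A where "A = (\<lambda>k. d (vs ! k)) ` {..<L}"
  have "0 \<in> {..<L}" using ne by (simp add: L_def)
  hence "finite A" "A \<noteq> {}" unfolding A_def by auto
  hence "Max A \<in> A" by (rule Max_in)
  then obtain k0 where k0: "k0 < L" "d (vs ! k0) = Max A" unfolding A_def by auto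
  have mx: "d (vs ! k) \<le> d (vs ! k0)" if "k < L" for k
    using k0(2) \<open>finite A\<close> that unfolding A_def by (simp add: Max_ge)
  have key: "w = p (vs ! k0)" if "adj (PG m p) (vs ! k0) w" "d w \<le> d (vs ! k0)" for w
  proof -
    from PG_adj[OF that(1)] show ?thesis
    proof
      assume "vs ! k0 \<noteq> m \<and> w = p (vs ! k0)" thus ?thesis by blast
    next
      assume h: "w \<noteq> m \<and> vs ! k0 = p w"
      hence "d w = Suc (d (p w))" using t unfolding tstruct_def by blast
      hence "d w = Suc (d (vs ! k0))" using h by simp
      thus ?thesis using that(2) by simp
    qed
  qed
  define a where "a = nx k0"
  define b where "b = (if k0 = 0 then L - 1 else k0 - 1)"
  have aL: "a < L" and bL: "b < L" using k0(1) L3 unfolding a_def b_def nx_def L_def by auto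
  have nb: "nx b = k0" using k0(1) L3 unfolding b_def nx_def L_def by auto
  have adja: "adj (PG m p) (vs ! k0) (vs ! a)" using cyc[OF k0(1)] unfolding a_def .
  have "adj (PG m p) (vs ! b) (vs ! k0)" using cyc[OF bL] nb by simp
  hence adjb: "adj (PG m p) (vs ! k0) (vs ! b)" unfolding adj_def using PG_sym[of m p "vs ! b" "vs ! k0"] by simp
  have "vs ! a = p (vs ! k0)" using key[OF adja mx[OF aL]] .
  moreover have "vs ! b = p (vs ! k0)" using key[OF adjb mx[OF bL]] .
  ultimately have "vs ! a = vs ! b" by simp
  hence "a = b" using dist aL bL unfolding L_def by (simp add: nth_eq_iff_index_eq)
  moreover have "a \<noteq> b" using k0(1) L3 unfolding a_def b_def nx_def L_def by auto
  ultimately show False by simp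
qed

lemma PG_tree:
  assumes t: "tstruct m p d"
  shows "is_tree (PG m p)"
proof -
  have sym: "\<forall>i j. PG m p i j = PG m p j i" by (intro allI) (rule PG_sym)
  have diag: "\<forall>i. PG m p i i = 0"
  proof
    fix i
    have nn: "\<not> (i \<noteq> m \<and> i = p i)"
    proof
      assume h: "i \<noteq> m \<and> i = p i"
      hence "p i \<noteq> i" using tstruct_pne[OF t] by blast
      thus False using h by argo
    qed
    thus "PG m p i i = 0" unfolding PG_def by auto
  qed
  have le1: "\<forall>i j. PG m p i j \<le> 1" by (simp add: PG_def)
  have root: "(adj (PG m p))\<^sup>*\<^sup>* m v" for v
    by (rule path_to_root[OF t]) (rule adj_PG_parent)
  have asym: "adj (PG m p) a b \<Longrightarrow> adj (PG m p) b a" for a b unfolding adj_def using PG_sym[of m p a b] by simp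
  have conn: "\<forall>i j. (adj (PG m p))\<^sup>*\<^sup>* i j"
  proof (intro allI)
    fix i j
    have "(adj (PG m p))\<^sup>*\<^sup>* i m" using rtranclp_sym[OF asym root[of i]] .
    thus "(adj (PG m p))\<^sup>*\<^sup>* i j" using root[of j] by (rule rtranclp_trans)
  qed
  show ?thesis unfolding is_tree_def using sym diag le1 conn PG_no_cycle[OF t] by blast
qed

lemma part2:
  fixes F :: "(real^'n) set"
  assumes g: "generates_Bn F" and rz: "realizes F G"
  shows "marked_tree_one (Bn_edges G) (Bn_marked G)"
proof -
  obtain m p d s where t: "tstruct m p d" and s: "\<forall>v. s v \<in> {1,-1}"
    and H: "G \<union> uminus ` G = Bset m p s \<union> uminus ` Bset m p s"
    using Gstructure[OF g rz] by blast
  have s': "\<And>v. s v \<in> {1,-1}" using s by blast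
  have "Bn_edges G = PG m p" using edges_H[of G] H edges_B[OF t s'] by simp
  moreover have "Bn_marked G = {m}" using marked_H[of G] H marked_B[OF t s'] by simp
  ultimately show ?thesis unfolding marked_tree_one_def using PG_tree[OF t] by simp
qed

lemma orth_nz: fixes Q :: "real^'n \<Rightarrow> real^'n"
  assumes Q: "orthogonal_transformation Q" shows "nz (Q x) = Q (nz x)"
  unfolding nz_def using orthogonal_transformation_norm[OF Q] orthogonal_transformation_scaleR[OF Q] by simp

lemma nzH: fixes G :: "(real^'n) set"
  assumes sf: "simplex_family F" and rz: "realizes F G" and x: "x \<in> G \<union> uminus ` G"
  shows "nz x \<in> F"
proof -
  have FG: "F = nz ` G" using rz unfolding realizes_nz by blast
  from x consider "x \<in> G" | y where "y \<in> G" "x = - y" by blast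
  thus ?thesis
  proof cases
    case 1 thus ?thesis using FG by blast
  next
    case 2
    have "nz y \<in> F" using 2 FG by blast
    hence "- nz y \<in> F" using simplex_neg[OF sf] by blast
    moreover have "nz x = - nz y" using 2(2) by (simp add: nz_def)
    ultimately show ?thesis by simp
  qed
qed

lemma simplex_image:
  fixes Q :: "real^'n \<Rightarrow> real^'n"
  assumes sf: "simplex_family F" and Q: "orthogonal_transformation Q"
  shows "simplex_family (Q ` F)"
proof -
  obtain f :: "'n \<Rightarrow> real^'n" where f1: "\<forall>i. norm (f i) = 1" and f2: "inj f"
    and f3: "independent (range f)" and f4: "F = range f \<union> uminus ` range f"
    using sf unfolding simplex_family_def by blast
  have lin: "linear Q" using Q orthogonal_transformation_linear by blast
  have injQ: "inj Q" using Q orthogonal_transformation_inj by blast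
  have "\<forall>i. norm ((Q \<circ> f) i) = 1" using f1 orthogonal_transformation_norm[OF Q] by simp
  moreover have "inj (Q \<circ> f)" using f2 injQ by (simp add: inj_compose)
  moreover have "independent (range (Q \<circ> f))"
  proof -
    have "independent (Q ` range f)"
      using linear_independent_injective_image[OF lin f3] injQ by (simp add: inj_on_subset)
    thus ?thesis by (simp add: image_comp)
  qed
  moreover have "Q ` F = range (Q \<circ> f) \<union> uminus ` range (Q \<circ> f)"
  proof -
    have "Q ` uminus ` range f = uminus ` range (Q \<circ> f)"
      using linear_neg[OF lin] by (auto simp: image_iff)
    thus ?thesis using f4 by (simp add: image_Un image_comp)
  qed
  ultimately show ?thesis unfolding simplex_family_def by blast
qed

lemma gen_image:
  fixes Q :: "real^'n \<Rightarrow> real^'n"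
  assumes g: "generates_Bn F" and rz: "realizes F G" and Q: "orthogonal_transformation Q"
  shows "generates_Bn (Q ` F)" "refl_group (Q ` F) = (\<lambda>g. Q \<circ> g \<circ> inv Q) ` W"
proof -
  have sf: "simplex_family F" using g unfolding generates_Bn_def by blast
  show RG: "refl_group (Q ` F) = (\<lambda>g. Q \<circ> g \<circ> inv Q) ` W"
    using rg_image[OF Q, of F] gen_W[OF g rz] by simp
  show "generates_Bn (Q ` F)" unfolding generates_Bn_def using simplex_image[OF sf Q] Q RG by blast
qed

lemma conj_W:
  fixes Q :: "real^'n \<Rightarrow> real^'n"
  assumes g: "generates_Bn F" and rz: "realizes F G" and Q: "orthogonal_transformation Q"
    and rz': "realizes (Q ` F) G'"
  shows "(\<lambda>g. Q \<circ> g \<circ> inv Q) ` W = W"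
  using gen_image[OF g rz Q] gen_W[OF _ rz'] by simp

lemma root_sq: assumes "r \<in> Bn_roots" shows "r \<bullet> r = 1 \<or> r \<bullet> r = 2"
  using assms
proof (cases rule: root_cases)
  case (s i a) thus ?thesis by (auto simp: inner_axis_axis)
next
  case (l i j a b) thus ?thesis by (auto simp: inner_add_left inner_add_right inner_axis_axis)
qed

lemma Q_root_dir:
  fixes Q :: "real^'n \<Rightarrow> real^'n"
  assumes Q: "orthogonal_transformation Q" and cw: "(\<lambda>g. Q \<circ> g \<circ> inv Q) ` W = W"
    and r: "r \<in> Bn_roots"
  shows "\<exists>r' \<in> Bn_roots. nz (Q r) = nz r'"
proof -
  have "Q \<circ> reflection r \<circ> inv Q \<in> W" using cw rg_refl[OF r] by blast
  hence "reflection (Q r) \<in> W" using reflection_conj[OF Q] by simp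
  hence "sp (reflection (Q r))" by (rule W_sp)
  moreover have "Q r \<noteq> 0" using root_nonzero[OF r] orthogonal_transformation_inj[OF Q]
    linear_0[OF orthogonal_transformation_linear[OF Q]] by (metis injD)
  ultimately have "sp (reflection (nz (Q r)))" using reflection_scale[of "1 / norm (Q r)" "Q r"]
    by (simp add: nz_def)
  moreover have "norm (nz (Q r)) = 1" using norm_nz \<open>Q r \<noteq> 0\<close> by blast
  ultimately show ?thesis using lemmaR by blast
qed

lemma conj_W_inv:
  fixes Q :: "real^'n \<Rightarrow> real^'n"
  assumes Q: "orthogonal_transformation Q" and cw: "(\<lambda>g. Q \<circ> g \<circ> inv Q) ` W = W"
  shows "(\<lambda>g. inv Q \<circ> g \<circ> inv (inv Q)) ` W = W"
proof -
  have ii: "inv (inv Q) = Q" using inv_inv_orth[OF Q] .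
  have QQ: "\<And>x. Q (inv Q x) = x" "\<And>x. inv Q (Q x) = x" using orth_inv_apply[OF Q] orth_inv_apply2[OF Q] by auto
  show ?thesis unfolding ii
  proof
    show "(\<lambda>g. inv Q \<circ> g \<circ> Q) ` W \<subseteq> W"
    proof
      fix h :: "real^'n \<Rightarrow> real^'n" assume "h \<in> (\<lambda>g. inv Q \<circ> g \<circ> Q) ` W"
      then obtain w where w: "w \<in> W" "h = inv Q \<circ> w \<circ> Q" by blast
      then obtain w' where w': "w' \<in> W" "w = Q \<circ> w' \<circ> inv Q" using cw by blast
      have "h = w'" using w(2) w'(2) QQ by (simp add: fun_eq_iff)
      thus "h \<in> W" using w' by simp
    qed
    show "W \<subseteq> (\<lambda>g. inv Q \<circ> g \<circ> Q) ` W"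
    proof
      fix w :: "real^'n \<Rightarrow> real^'n" assume w: "w \<in> W"
      have "Q \<circ> w \<circ> inv Q \<in> W" using cw w by blast
      moreover have "w = inv Q \<circ> (Q \<circ> w \<circ> inv Q) \<circ> Q" using QQ by (simp add: fun_eq_iff)
      ultimately show "w \<in> (\<lambda>g. inv Q \<circ> g \<circ> Q) ` W" by blast
    qed
  qed
qed

lemma Q_signed_perm:
  fixes Q :: "real^'n \<Rightarrow> real^'n"
  assumes n3: "CARD('n) \<ge> 3" and Q: "orthogonal_transformation Q"
    and cw: "(\<lambda>g. Q \<circ> g \<circ> inv Q) ` W = W"
  shows "\<exists>k a. a \<in> {1,-1} \<and> Q (ee i) = a *\<^sub>R ee k"
proof -
  have Qi0: "Q (ee i) \<noteq> 0" and nQi: "norm (Q (ee i)) = 1"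
    using orthogonal_transformation_norm[OF Q, of "ee i"] by auto
  obtain r' where r': "r' \<in> Bn_roots" "nz (Q (ee i)) = nz r'"
    using Q_root_dir[OF Q cw root_s[of 1 i]] by auto
  have Qr: "Q (ee i) = nz r'" using r'(2) nQi by (simp add: nz_def)
  from r'(1) show ?thesis
  proof (cases rule: root_cases)
    case (s k a)
    have "norm r' = 1" using s by auto
    thus ?thesis using Qr s by (auto simp: nz_def)
  next
    case (l k l' a b)
    have "\<exists>t. t \<noteq> k \<and> t \<noteq> l'"
    proof (rule ccontr)
      assume "\<not> (\<exists>t. t \<noteq> k \<and> t \<noteq> l')"
      hence "(UNIV :: 'n set) \<subseteq> {k, l'}" by blast
      hence "CARD('n) \<le> card {k, l'}" by (simp add: card_mono)
      also have "\<dots> \<le> 2" by (simp add: card_insert_if)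
      finally show False using n3 by simp
    qed
    then obtain t where t: "t \<noteq> k" "t \<noteq> l'" by blast
    define w where "w = a *\<^sub>R ee k + 1 *\<^sub>R ee t"
    have wR: "w \<in> Bn_roots" unfolding w_def using root_l[of k t a 1] t l by auto
    have ab: "a * a = 1" "b * b = 1" using l by auto
    have rw: "r' \<bullet> w = 1" unfolding w_def using l t ab
      by (simp add: inner_add_left inner_add_right inner_axis_axis)
    have rr: "r' \<bullet> r' = 2" using l ab by (simp add: inner_add_left inner_add_right inner_axis_axis)
    have ww: "w \<bullet> w = 2" unfolding w_def using ab t
      by (simp add: inner_add_left inner_add_right inner_axis_axis)
    have Qi: "orthogonal_transformation (inv Q)" using orthogonal_transformation_inv[OF Q] .
    obtain x where x: "x \<in> Bn_roots" "nz (inv Q w) = nz x"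
      using Q_root_dir[OF Qi conj_W_inv[OF Q cw] wR] by blast
    define y where "y = inv Q w"
    have yi: "y $ i = r' \<bullet> w / norm r'"
    proof -
      have "y $ i = ee i \<bullet> y" by (simp add: inner_axis')
      also have "\<dots> = Q (ee i) \<bullet> Q y" using orth_inner[OF Q] by simp
      also have "Q y = w" unfolding y_def using orth_inv_apply[OF Q] .
      finally show ?thesis using Qr by (simp add: nz_def inner_scaleR_left)
    qed
    have nr: "(norm r')^2 = 2" using rr by (simp add: power2_norm_eq_inner)
    have yi2: "(y $ i)^2 = 1/2" using yi rw nr by (simp add: power_divide)
    have yy: "y \<bullet> y = 2" unfolding y_def using orth_inner[OF Qi, of w w] ww by simp
    have x0: "x \<noteq> 0" using root_nonzero[OF x(1)] .
    have y0: "y \<noteq> 0" using yy by auto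
    have "y = norm y *\<^sub>R nz y" using y0 by (simp add: nz_def)
    also have "nz y = nz x" using x(2) by (simp add: y_def)
    also have "norm y *\<^sub>R nz x = (norm y / norm x) *\<^sub>R x" by (simp add: nz_def)
    finally have "y = (norm y / norm x) *\<^sub>R x" .
    hence "y $ i = ((norm y / norm x) *\<^sub>R x) $ i" by (rule arg_cong)
    hence "y $ i = (norm y / norm x) * x $ i" by (simp only: vector_scaleR_component real_scaleR_def)
    hence "(y $ i)^2 = (norm y)^2 / (norm x)^2 * (x $ i)^2" by (simp add: power_mult_distrib power_divide)
    also have "\<dots> = 2 / (x \<bullet> x) * (x $ i)^2" using yy by (simp add: power2_norm_eq_inner)
    finally have e1: "(y $ i)^2 = 2 / (x \<bullet> x) * (x $ i)^2" .
    have "x $ i \<in> {-1,0,1}" using root_comp[OF x(1)] .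
    hence "(x $ i)^2 = 0 \<or> (x $ i)^2 = 1" by auto
    moreover have "x \<bullet> x = 1 \<or> x \<bullet> x = 2" using root_sq[OF x(1)] .
    ultimately have False using e1 yi2 by auto
    thus ?thesis ..
  qed
qed

lemma sp_roots:
  fixes L :: "real^'n \<Rightarrow> real^'n"
  assumes lin: "linear L" and inj: "inj L"
    and sp: "\<And>i. \<exists>k a. a \<in> {1,-1} \<and> L (ee i) = a *\<^sub>R ee k"
    and r: "r \<in> Bn_roots"
  shows "L r \<in> Bn_roots"
proof -
  have "\<forall>i. \<exists>k. \<exists>a. a \<in> {1,-1} \<and> L (ee i) = a *\<^sub>R ee k" using sp by blast
  from choice[OF this] obtain \<sigma> where "\<forall>i. \<exists>a. a \<in> {1,-1} \<and> L (ee i) = a *\<^sub>R ee (\<sigma> i)" by blast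
  from choice[OF this] obtain \<epsilon> where se0: "\<forall>i. \<epsilon> i \<in> {1,-1} \<and> L (ee i) = \<epsilon> i *\<^sub>R ee (\<sigma> i)" by blast
  have se: "\<And>i. \<epsilon> i \<in> {1,-1} \<and> L (ee i) = \<epsilon> i *\<^sub>R ee (\<sigma> i)" using se0 by blast
  have sinj: "\<sigma> i \<noteq> \<sigma> j" if "i \<noteq> j" for i j
  proof
    assume h: "\<sigma> i = \<sigma> j"
    have ee: "\<epsilon> i * \<epsilon> i = 1" "\<epsilon> j * \<epsilon> j = 1" using se[of i] se[of j] by auto
    have "L (ee i) = (\<epsilon> i * \<epsilon> j) *\<^sub>R L (ee j)" using se[of i] se[of j] h ee by (simp add: algebra_simps)
    also have "\<dots> = L ((\<epsilon> i * \<epsilon> j) *\<^sub>R ee j)" using linear_scale[OF lin] by simp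
    finally have "ee i = (\<epsilon> i * \<epsilon> j) *\<^sub>R ee j" using inj by (simp add: inj_eq)
    hence "1 *\<^sub>R ee i = (\<epsilon> i * \<epsilon> j) *\<^sub>R ee j" by simp
    thus False using one_one[of 1 i "\<epsilon> i * \<epsilon> j" j] that by simp
  qed
  from r show ?thesis
  proof (cases rule: root_cases)
    case (s i a)
    have "L r = (a * \<epsilon> i) *\<^sub>R ee (\<sigma> i)" using s se[of i] linear_scale[OF lin] by simp
    moreover have "a * \<epsilon> i \<in> {1,-1}" using s(1) se[of i] by auto
    ultimately show ?thesis using root_s by simp
  next
    case (l i j a b)
    have "L r = (a * \<epsilon> i) *\<^sub>R ee (\<sigma> i) + (b * \<epsilon> j) *\<^sub>R ee (\<sigma> j)"
      using l se[of i] se[of j] linear_scale[OF lin] linear_add[OF lin] by simp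
    moreover have "a * \<epsilon> i \<in> {1,-1}" "b * \<epsilon> j \<in> {1,-1}" using l se[of i] se[of j] by auto
    ultimately show ?thesis using root_l sinj[OF l(1)] by simp
  qed
qed

lemma Hsub:
  fixes Q :: "real^'n \<Rightarrow> real^'n"
  assumes Q: "orthogonal_transformation Q" and QR: "\<And>r. r \<in> Bn_roots \<Longrightarrow> Q r \<in> Bn_roots"
    and sf: "simplex_family F" and rz: "realizes F G" and rz': "realizes (Q ` F) G'"
  shows "Q ` (G \<union> uminus ` G) \<subseteq> G' \<union> uminus ` G'"
proof
  fix y assume "y \<in> Q ` (G \<union> uminus ` G)"
  then obtain r where r: "r \<in> G \<union> uminus ` G" "y = Q r" by blast
  have GR: "G \<subseteq> Bn_roots" using rz unfolding realizes_def by blast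
  have rR: "r \<in> Bn_roots" using r(1) GR root_neg by auto
  have "nz r \<in> F" using nzH[OF sf rz r(1)] .
  hence "Q (nz r) \<in> nz ` G'" using rz' unfolding realizes_nz by blast
  then obtain g' where g'0: "g' \<in> G'" "Q (nz r) = nz g'" by blast
  have g': "g' \<in> G'" "nz (Q r) = nz g'" using g'0 orth_nz[OF Q, of r] by auto
  have "g' \<in> Bn_roots" using g'(1) rz' unfolding realizes_def by blast
  hence "Q r = g'" using nz_inj[OF QR[OF rR] _ g'(2)] by blast
  thus "y \<in> G' \<union> uminus ` G'" using r(2) g'(1) by blast
qed

lemma H_scale:
  fixes G :: "(real^'n) set"
  assumes c: "c \<in> {1,-1}"
  shows "c *\<^sub>R x \<in> G \<union> uminus ` G \<longleftrightarrow> x \<in> G \<union> uminus ` G"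
proof -
  have "c = 1 \<or> c = -1" using c by simp
  thus ?thesis
  proof
    assume "c = 1" thus ?thesis by simp
  next
    assume "c = -1"
    thus ?thesis using neg_closed_H[of x G] neg_closed_H[of "-x" G] by auto
  qed
qed

lemma sigma_inj:
  fixes L :: "real^'n \<Rightarrow> real^'n"
  assumes lin: "linear L" and inj: "inj L"
    and se: "\<And>i. \<epsilon> i \<in> {1,-1} \<and> L (ee i) = \<epsilon> i *\<^sub>R ee (\<sigma> i)"
  shows "inj \<sigma>"
proof (rule injI)
  fix i j assume h: "\<sigma> i = \<sigma> j"
  show "i = j"
  proof (rule ccontr)
    assume ij: "i \<noteq> j"
    have ee: "\<epsilon> i * \<epsilon> i = 1" "\<epsilon> j * \<epsilon> j = 1" using se[of i] se[of j] by auto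
    have "L (ee i) = (\<epsilon> i * \<epsilon> j) *\<^sub>R L (ee j)" using se[of i] se[of j] h ee by (simp add: algebra_simps)
    also have "\<dots> = L ((\<epsilon> i * \<epsilon> j) *\<^sub>R ee j)" using linear_scale[OF lin] by simp
    finally have "ee i = (\<epsilon> i * \<epsilon> j) *\<^sub>R ee j" using inj by (simp add: inj_eq)
    hence "1 *\<^sub>R ee i = (\<epsilon> i * \<epsilon> j) *\<^sub>R ee j" by simp
    thus False using one_one[of 1 i "\<epsilon> i * \<epsilon> j" j] ij by simp
  qed
qed

lemma card_sign_map:
  assumes e: "e \<in> {1,-1::real}"
  shows "card {t :: real. t \<in> {1,-1} \<and> P (t * e)} = card {u :: real. u \<in> {1,-1} \<and> P u}"
proof -
  have ee: "e * e = 1" using e by auto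
  have "{t :: real. t \<in> {1,-1} \<and> P (t * e)} = (\<lambda>u. u * e) ` {u :: real. u \<in> {1,-1} \<and> P u}"
  proof (intro set_eqI iffI)
    fix t assume t: "t \<in> {t :: real. t \<in> {1,-1} \<and> P (t * e)}"
    have "t = (t * e) * e" using ee by (simp add: mult.assoc)
    moreover have "t * e \<in> {1,-1}" using t e by auto
    ultimately show "t \<in> (\<lambda>u. u * e) ` {u :: real. u \<in> {1,-1} \<and> P u}" using t by blast
  next
    fix t assume "t \<in> (\<lambda>u. u * e) ` {u :: real. u \<in> {1,-1} \<and> P u}"
    then obtain u where u: "u \<in> {1,-1}" "P u" "t = u * e" by blast
    have te: "t * e = u" using u(3) ee by (simp add: mult.assoc)
    have "t \<in> {1,-1}" using u e by auto
    moreover have "P (t * e)" using te u(2) by simp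
    ultimately show "t \<in> {t :: real. t \<in> {1,-1} \<and> P (t * e)}" by simp
  qed
  moreover have "inj_on (\<lambda>u. u * e) {u :: real. u \<in> {1,-1} \<and> P u}"
    using ee by (intro inj_onI) (metis mult_cancel_right zero_neq_one mult_zero_left)
  ultimately show ?thesis by (simp add: card_image)
qed

lemma part3_big:
  fixes F :: "(real^'n) set"
  assumes n3: "CARD('n) \<ge> 3" and g: "generates_Bn F" and Q: "orthogonal_transformation Q"
    and F': "Q ` F = F'" and rz: "realizes F G" and rz': "realizes F' G'"
  shows "marked_iso (Bn_edges G) (Bn_marked G) (Bn_edges G') (Bn_marked G')"
proof -
  have sf: "simplex_family F" using g unfolding generates_Bn_def by blast
  have rzQ: "realizes (Q ` F) G'" using rz' F' by simp
  have g': "generates_Bn F'" using gen_image(1)[OF g rz Q] F' by simp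
  have sf': "simplex_family F'" using g' unfolding generates_Bn_def by blast
  have cw: "(\<lambda>g. Q \<circ> g \<circ> inv Q) ` W = W" using conj_W[OF g rz Q rzQ] .
  have Qi: "orthogonal_transformation (inv Q)" using orthogonal_transformation_inv[OF Q] .
  have cwi: "(\<lambda>g. inv Q \<circ> g \<circ> inv (inv Q)) ` W = W" using conj_W_inv[OF Q cw] .
  have linQ: "linear Q" and injQ: "inj Q" using Q orthogonal_transformation_linear orthogonal_transformation_inj by blast+
  have linQi: "linear (inv Q)" and injQi: "inj (inv Q)" using Qi orthogonal_transformation_linear orthogonal_transformation_inj by blast+
  have QR: "Q r \<in> Bn_roots" if "r \<in> Bn_roots" for r
    using sp_roots[OF linQ injQ Q_signed_perm[OF n3 Q cw] that] .
  have QiR: "inv Q r \<in> Bn_roots" if "r \<in> Bn_roots" for r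
    using sp_roots[OF linQi injQi Q_signed_perm[OF n3 Qi cwi] that] .
  have QQ: "\<And>x. Q (inv Q x) = x" "\<And>x. inv Q (Q x) = x" using orth_inv_apply[OF Q] orth_inv_apply2[OF Q] by auto
  have FF: "inv Q ` F' = F" using F' QQ by (auto simp: image_iff)
  have rz2: "realizes (inv Q ` F') G" using rz FF by simp
  define H where "H = G \<union> uminus ` G"
  define H' where "H' = G' \<union> uminus ` G'"
  have s1: "Q ` H \<subseteq> H'" unfolding H_def H'_def using Hsub[OF Q QR sf rz rzQ] by blast
  have s2: "inv Q ` H' \<subseteq> H" unfolding H_def H'_def using Hsub[OF Qi QiR sf' rz' rz2] by blast
  have memQ: "Q x \<in> H' \<longleftrightarrow> x \<in> H" for x
  proof
    assume "Q x \<in> H'"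
    hence "inv Q (Q x) \<in> H" using s2 by blast
    thus "x \<in> H" using QQ by simp
  next
    assume "x \<in> H" thus "Q x \<in> H'" using s1 by blast
  qed
  have "\<forall>i. \<exists>k. \<exists>a. a \<in> {1,-1} \<and> Q (ee i) = a *\<^sub>R ee k" using Q_signed_perm[OF n3 Q cw] by blast
  from choice[OF this] obtain \<sigma> where "\<forall>i. \<exists>a. a \<in> {1,-1} \<and> Q (ee i) = a *\<^sub>R ee (\<sigma> i)" by blast
  from choice[OF this] obtain \<epsilon> where se0: "\<forall>i. \<epsilon> i \<in> {1,-1} \<and> Q (ee i) = \<epsilon> i *\<^sub>R ee (\<sigma> i)" by blast
  have se: "\<And>i. \<epsilon> i \<in> {1,-1} \<and> Q (ee i) = \<epsilon> i *\<^sub>R ee (\<sigma> i)" using se0 by blast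
  have eps: "\<epsilon> i * \<epsilon> i = 1" for i using se[of i] by auto
  have sinj: "inj \<sigma>" using sigma_inj[OF linQ injQ se] .
  have sbij: "bij \<sigma>" using sinj finite_UNIV_inj_surj[OF finite sinj] by (simp add: bij_def)
  have eQ: "ee (\<sigma> i) = \<epsilon> i *\<^sub>R Q (ee i)" for i using se[of i] eps[of i] by simp
  have mem_m: "(ee (\<sigma> i) \<in> G' \<or> - ee (\<sigma> i) \<in> G') \<longleftrightarrow> (ee i \<in> G \<or> - ee i \<in> G)" for i
  proof -
    have "(ee (\<sigma> i) \<in> G' \<or> - ee (\<sigma> i) \<in> G') \<longleftrightarrow> ee (\<sigma> i) \<in> H'" unfolding H'_def using memH by blast
    also have "\<dots> \<longleftrightarrow> Q (\<epsilon> i *\<^sub>R ee i) \<in> H'" using eQ linear_scale[OF linQ] by simp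
    also have "\<dots> \<longleftrightarrow> \<epsilon> i *\<^sub>R ee i \<in> H" by (rule memQ)
    also have "\<dots> \<longleftrightarrow> ee i \<in> H" unfolding H_def using H_scale se[of i] by blast
    also have "\<dots> \<longleftrightarrow> (ee i \<in> G \<or> - ee i \<in> G)" unfolding H_def using memH by blast
    finally show ?thesis .
  qed
  have mem_e: "(ee (\<sigma> i) + t *\<^sub>R ee (\<sigma> j) \<in> G' \<or> - (ee (\<sigma> i) + t *\<^sub>R ee (\<sigma> j)) \<in> G') \<longleftrightarrow>
     (ee i + (t * (\<epsilon> i * \<epsilon> j)) *\<^sub>R ee j \<in> G \<or> - (ee i + (t * (\<epsilon> i * \<epsilon> j)) *\<^sub>R ee j) \<in> G)" for i j t
  proof -
    have eqx: "ee (\<sigma> i) + t *\<^sub>R ee (\<sigma> j) = Q (\<epsilon> i *\<^sub>R (ee i + (t * (\<epsilon> i * \<epsilon> j)) *\<^sub>R ee j))"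
    proof -
      have "Q (\<epsilon> i *\<^sub>R (ee i + (t * (\<epsilon> i * \<epsilon> j)) *\<^sub>R ee j)) = \<epsilon> i *\<^sub>R Q (ee i) + (\<epsilon> i * (t * (\<epsilon> i * \<epsilon> j))) *\<^sub>R Q (ee j)"
        using linear_scale[OF linQ] linear_add[OF linQ] by (simp add: scaleR_add_right)
      also have "(\<epsilon> i * (t * (\<epsilon> i * \<epsilon> j))) = t * \<epsilon> j" using eps[of i] by (simp add: algebra_simps)
      finally show ?thesis using eQ[of i] eQ[of j] by simp
    qed
    have "(ee (\<sigma> i) + t *\<^sub>R ee (\<sigma> j) \<in> G' \<or> - (ee (\<sigma> i) + t *\<^sub>R ee (\<sigma> j)) \<in> G') \<longleftrightarrow>
       ee (\<sigma> i) + t *\<^sub>R ee (\<sigma> j) \<in> H'" unfolding H'_def using memH by blast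
    also have "\<dots> \<longleftrightarrow> Q (\<epsilon> i *\<^sub>R (ee i + (t * (\<epsilon> i * \<epsilon> j)) *\<^sub>R ee j)) \<in> H'" by (simp only: eqx)
    also have "Q (\<epsilon> i *\<^sub>R (ee i + (t * (\<epsilon> i * \<epsilon> j)) *\<^sub>R ee j)) \<in> H' \<longleftrightarrow>
        \<epsilon> i *\<^sub>R (ee i + (t * (\<epsilon> i * \<epsilon> j)) *\<^sub>R ee j) \<in> H" by (rule memQ)
    also have "\<dots> \<longleftrightarrow> ee i + (t * (\<epsilon> i * \<epsilon> j)) *\<^sub>R ee j \<in> H" unfolding H_def using H_scale se[of i] by blast
    also have "\<dots> \<longleftrightarrow> (ee i + (t * (\<epsilon> i * \<epsilon> j)) *\<^sub>R ee j \<in> G \<or> - (ee i + (t * (\<epsilon> i * \<epsilon> j)) *\<^sub>R ee j) \<in> G)"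
      unfolding H_def using memH by blast
    finally show ?thesis .
  qed
  have edges: "Bn_edges G' (\<sigma> i) (\<sigma> j) = Bn_edges G i j" for i j
  proof (cases "i = j")
    case True thus ?thesis by (simp add: Bn_edges_def)
  next
    case False
    hence "\<sigma> i \<noteq> \<sigma> j" using sinj by (simp add: inj_eq)
    hence "Bn_edges G' (\<sigma> i) (\<sigma> j) = card {t :: real. t \<in> {1,-1} \<and>
       (ee i + (t * (\<epsilon> i * \<epsilon> j)) *\<^sub>R ee j \<in> G \<or> - (ee i + (t * (\<epsilon> i * \<epsilon> j)) *\<^sub>R ee j) \<in> G)}"
      unfolding Bn_edges_def using mem_e by simp
    also have "\<dots> = card {u :: real. u \<in> {1,-1} \<and> (ee i + u *\<^sub>R ee j \<in> G \<or> - (ee i + u *\<^sub>R ee j) \<in> G)}"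
    proof (rule card_sign_map)
      show "\<epsilon> i * \<epsilon> j \<in> {1,-1}" using se[of i] se[of j] by auto
    qed
    also have "\<dots> = Bn_edges G i j" using False by (simp add: Bn_edges_def)
    finally show ?thesis .
  qed
  have marks: "\<sigma> ` Bn_marked G = Bn_marked G'"
  proof (intro set_eqI iffI)
    fix k assume "k \<in> \<sigma> ` Bn_marked G"
    then obtain i where "i \<in> Bn_marked G" "k = \<sigma> i" by blast
    thus "k \<in> Bn_marked G'" using mem_m[of i] unfolding Bn_marked_def by simp
  next
    fix k assume k: "k \<in> Bn_marked G'"
    obtain i where i: "k = \<sigma> i" using sbij by (metis bij_pointE)
    hence "i \<in> Bn_marked G" using k mem_m[of i] unfolding Bn_marked_def by simp
    thus "k \<in> \<sigma> ` Bn_marked G" using i by blast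
  qed
  show ?thesis unfolding marked_iso_def using sbij edges marks by blast
qed

lemma tree_two_edges:
  fixes E :: "'n::finite \<Rightarrow> 'n \<Rightarrow> nat"
  assumes n2: "CARD('n) = 2" and t: "is_tree E"
  shows "E i j = (if i = j then 0 else 1)"
proof (cases "i = j")
  case True thus ?thesis using t unfolding is_tree_def by simp
next
  case False
  have U: "(UNIV :: 'n set) = {i, j}"
  proof -
    have "card {i, j} = CARD('n)" using False n2 by simp
    thus ?thesis by (intro card_subset_eq[symmetric]) auto
  qed
  have le: "E i j \<le> 1" using t unfolding is_tree_def by blast
  have "E i j \<noteq> 0"
  proof
    assume z: "E i j = 0"
    have zz: "\<not> adj E a b" for a b
    proof -
      have "a \<in> {i,j}" "b \<in> {i,j}" using U by auto
      moreover have "E i i = 0" "E j j = 0" "E j i = 0" using t z unfolding is_tree_def by metis+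
      ultimately show ?thesis using z unfolding adj_def by auto
    qed
    have "(adj E)\<^sup>*\<^sup>* i j" using t unfolding is_tree_def by blast
    hence "i = j" using zz by (induction rule: rtranclp_induct) auto
    thus False using False by simp
  qed
  thus ?thesis using le False by simp
qed

lemma iso_two:
  fixes E :: "'n::finite \<Rightarrow> 'n \<Rightarrow> nat"
  assumes n2: "CARD('n) = 2" and t: "marked_tree_one E M" and t': "marked_tree_one E' M'"
  shows "marked_iso E M E' M'"
proof -
  obtain x where x: "M = {x}" using t unfolding marked_tree_one_def by (auto simp: card_1_singleton_iff)
  obtain y where y: "M' = {y}" using t' unfolding marked_tree_one_def by (auto simp: card_1_singleton_iff)
  define \<pi> where "\<pi> z = (if z = x then y else if z = y then x else z)" for z
  have pp: "\<pi> (\<pi> z) = z" for z unfolding \<pi>_def by auto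
  have bij: "bij \<pi>" by (rule o_bij[of \<pi>]) (auto simp: fun_eq_iff pp)
  have inj: "\<pi> a = \<pi> b \<longleftrightarrow> a = b" for a b using bij by (metis pp)
  have "E' (\<pi> i) (\<pi> j) = E i j" for i j
    using tree_two_edges[OF n2, of E] tree_two_edges[OF n2, of E'] t t' inj
    unfolding marked_tree_one_def by simp
  moreover have "\<pi> ` M = M'" using x y by (simp add: \<pi>_def)
  ultimately show ?thesis unfolding marked_iso_def using bij by blast
qed

lemma part3:
  fixes F :: "(real^'n) set"
  assumes n2: "CARD('n) \<ge> 2" and g: "generates_Bn F" and iso: "isometric_families F F'"
    and rz: "realizes F G" and rz': "realizes F' G'"
  shows "marked_iso (Bn_edges G) (Bn_marked G) (Bn_edges G') (Bn_marked G')"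
proof -
  obtain Q where Q: "orthogonal_transformation Q" and F': "Q ` F = F'"
    using iso unfolding isometric_families_def by blast
  show ?thesis
  proof (cases "CARD('n) = 2")
    case True
    have g': "generates_Bn F'" using gen_image(1)[OF g rz Q] F' by simp
    show ?thesis using iso_two[OF True part2[OF g rz] part2[OF g' rz']] .
  next
    case False
    hence "CARD('n) \<ge> 3" using n2 by simp
    thus ?thesis using part3_big[OF _ g Q F' rz rz'] by blast
  qed
qed

lemma card_simplex:
  fixes F :: "(real^'n) set"
  assumes sf: "simplex_family F"
  shows "card F = 2 * CARD('n)"
proof -
  obtain f :: "'n \<Rightarrow> real^'n" where f1: "\<forall>i. norm (f i) = 1" and f2: "inj f"
    and f3: "independent (range f)" and f4: "F = range f \<union> uminus ` range f"
    using sf unfolding simplex_family_def by blast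
  have disj: "range f \<inter> uminus ` range f = {}"
  proof (rule ccontr)
    assume "range f \<inter> uminus ` range f \<noteq> {}"
    then obtain i j where ij: "f i = - f j" by auto
    show False
    proof (cases "i = j")
      case True
      hence "f i = 0" using ij by (simp add: vec_eq_iff)
      thus False using f1 by (metis norm_zero zero_neq_one)
    next
      case False
      hence "f j \<noteq> f i" using f2 by (metis injD)
      hence "f j \<in> range f - {f i}" by auto
      hence "- f j \<in> span (range f - {f i})" by (intro span_neg span_base)
      hence "f i \<in> span (range f - {f i})" using ij by simp
      hence "dependent (range f)" unfolding dependent_def by blast
      thus False using f3 by blast
    qed
  qed
  have c1: "card (range f) = CARD('n)" using f2 by (simp add: card_image)
  have c2: "card (uminus ` range f) = CARD('n)" using c1 by (simp add: card_image inj_on_def)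
  show ?thesis using card_Un_disjoint[OF _ _ disj] c1 c2 f4 by simp
qed

lemma card_H:
  fixes F :: "(real^'n) set"
  assumes sf: "simplex_family F" and rz: "realizes F G"
  shows "card (G \<union> uminus ` G) = 2 * CARD('n)" "nz ` (G \<union> uminus ` G) = F"
proof -
  have GR: "G \<subseteq> Bn_roots" using rz unfolding realizes_def by blast
  have HR: "G \<union> uminus ` G \<subseteq> Bn_roots" using GR root_neg by auto
  have inj: "inj_on nz (G \<union> uminus ` G)" using HR nz_inj by (meson inj_onI subsetD)
  have FG: "F = nz ` G" using rz unfolding realizes_nz by blast
  show im: "nz ` (G \<union> uminus ` G) = F"
  proof
    show "nz ` (G \<union> uminus ` G) \<subseteq> F" using nzH[OF sf rz] by blast
    show "F \<subseteq> nz ` (G \<union> uminus ` G)" using FG by blast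
  qed
  show "card (G \<union> uminus ` G) = 2 * CARD('n)"
    using card_image[OF inj] im card_simplex[OF sf] by simp
qed

lemma sum_reindex_bij:
  fixes g :: "'n::finite \<Rightarrow> real"
  assumes "bij \<pi>"
  shows "(\<Sum>j\<in>UNIV. g j) = (\<Sum>k\<in>UNIV. g (\<pi> k))"
proof -
  have "inj \<pi>" "\<pi> ` UNIV = UNIV" using assms by (auto simp: bij_def)
  thus ?thesis using sum.reindex[of \<pi> UNIV g] by simp
qed

lemma part4:
  fixes F :: "(real^'n) set"
  assumes g: "generates_Bn F" and g': "generates_Bn F'" and rz: "realizes F G" and rz': "realizes F' G'"
    and iso: "marked_iso (Bn_edges G) (Bn_marked G) (Bn_edges G') (Bn_marked G')"
  shows "isometric_families F F'"
proof -
  obtain m p d s where t: "tstruct m p d" and s0: "\<forall>v. s v \<in> {1,-1}"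
    and HG: "G \<union> uminus ` G = Bset m p s \<union> uminus ` Bset m p s"
    using Gstructure[OF g rz] by blast
  obtain m' p' d' s' where t': "tstruct m' p' d'" and s0': "\<forall>v. s' v \<in> {1,-1}"
    and HG': "G' \<union> uminus ` G' = Bset m' p' s' \<union> uminus ` Bset m' p' s'"
    using Gstructure[OF g' rz'] by blast
  have s: "\<And>v. s v \<in> {1,-1}" and s': "\<And>v. s' v \<in> {1,-1}" using s0 s0' by blast+
  have EG: "Bn_edges G = PG m p" using edges_H[of G] HG edges_B[OF t s] by simp
  have MG: "Bn_marked G = {m}" using marked_H[of G] HG marked_B[OF t s] by simp
  have EG': "Bn_edges G' = PG m' p'" using edges_H[of G'] HG' edges_B[OF t' s'] by simp
  have MG': "Bn_marked G' = {m'}" using marked_H[of G'] HG' marked_B[OF t' s'] by simp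
  obtain \<pi> where bij: "bij \<pi>" and pe: "\<And>i j. PG m' p' (\<pi> i) (\<pi> j) = PG m p i j" and pm: "\<pi> ` {m} = {m'}"
    using iso unfolding marked_iso_def EG MG EG' MG' by blast
  have pim: "\<pi> m = m'" using pm by simp
  have injp: "\<pi> a = \<pi> b \<longleftrightarrow> a = b" for a b using bij by (simp add: bij_def inj_eq)
  define H where "H = G \<union> uminus ` G"
  define H' where "H' = G' \<union> uminus ` G'"
  have ex_t: "\<exists>t. t \<in> {1,-1} \<and> ee (\<pi> (p v)) + t *\<^sub>R ee (\<pi> v) \<in> H'" if "v \<noteq> m" for v
  proof -
    have pv: "p v \<noteq> v" using tstruct_pne[OF t that] .
    have "PG m p (p v) v = 1" using that by (simp add: PG_def)
    hence "Bn_edges G' (\<pi> (p v)) (\<pi> v) > 0" using pe EG' by simp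
    moreover have "\<pi> (p v) \<noteq> \<pi> v" using pv injp by simp
    ultimately obtain t where "t \<in> {1,-1}" "ee (\<pi> (p v)) + t *\<^sub>R ee (\<pi> v) \<in> G' \<or> - (ee (\<pi> (p v)) + t *\<^sub>R ee (\<pi> v)) \<in> G'"
      using Bn_edges_pos_iff by blast
    thus ?thesis unfolding H'_def using memH by blast
  qed
  define \<tau> where "\<tau> v = (if v = m then 1 else SOME t. t \<in> {1,-1} \<and> ee (\<pi> (p v)) + t *\<^sub>R ee (\<pi> v) \<in> H')" for v
  have tau: "\<tau> v \<in> {1,-1}" for v
  proof (cases "v = m")
    case True thus ?thesis by (simp add: \<tau>_def)
  next
    case False thus ?thesis using someI_ex[OF ex_t[OF False]] by (simp add: \<tau>_def)
  qed
  have tauH: "ee (\<pi> (p v)) + \<tau> v *\<^sub>R ee (\<pi> v) \<in> H'" if "v \<noteq> m" for v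
    using someI_ex[OF ex_t[OF that]] that by (simp add: \<tau>_def)
  define c where "c v = s v * \<tau> v" for v
  define \<epsilon> where "\<epsilon> v = (\<Prod>k<d v. c ((p ^^ k) v))" for v
  have dm: "d m = 0" using t unfolding tstruct_def by blast
  have em: "\<epsilon> m = 1" unfolding \<epsilon>_def using dm by simp
  have erec: "\<epsilon> v = c v * \<epsilon> (p v)" if "v \<noteq> m" for v
  proof -
    have dv: "d v = Suc (d (p v))" using t that unfolding tstruct_def by blast
    have "\<epsilon> v = c ((p ^^ 0) v) * (\<Prod>k<d (p v). c ((p ^^ Suc k) v))"
      unfolding \<epsilon>_def dv by (rule prod.lessThan_Suc_shift)
    also have "(\<Prod>k<d (p v). c ((p ^^ Suc k) v)) = \<epsilon> (p v)"
      unfolding \<epsilon>_def by (simp add: funpow_Suc_right del: funpow.simps)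
    finally show ?thesis by simp
  qed
  have eps: "\<epsilon> v \<in> {1,-1}" for v
  proof (induction "d v" arbitrary: v rule: less_induct)
    case less
    show ?case
    proof (cases "v = m")
      case True thus ?thesis using em by simp
    next
      case False
      hence "d (p v) < d v" using t unfolding tstruct_def by simp
      hence "\<epsilon> (p v) \<in> {1,-1}" using less by blast
      moreover have "c v \<in> {1,-1}" using s[of v] tau[of v] unfolding c_def by auto
      ultimately show ?thesis using erec[OF False] by auto
    qed
  qed
  have eps2: "\<epsilon> v * \<epsilon> v = 1" for v using eps[of v] by auto
  define Q where "Q x = (\<chi> j. \<epsilon> (inv \<pi> j) * x $ (inv \<pi> j))" for x :: "real^'n"
  have ipi: "inv \<pi> (\<pi> i) = i" for i using bij by (simp add: bij_def inv_f_f)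
  have pii: "\<pi> (inv \<pi> j) = j" for j using bij by (simp add: bij_def surj_f_inv_f)
  have Qc: "Q x $ (\<pi> i) = \<epsilon> i * x $ i" for x i unfolding Q_def by (simp add: ipi)
  have allpi: "(\<forall>j. P j) \<longleftrightarrow> (\<forall>i. P (\<pi> i))" for P by (metis pii)
  have Qe: "Q (ee i) = \<epsilon> i *\<^sub>R ee (\<pi> i)" for i
    unfolding vec_eq_iff allpi[of "\<lambda>j. Q (ee i) $ j = (\<epsilon> i *\<^sub>R ee (\<pi> i)) $ j"]
    by (auto simp: Qc ee_nth injp)
  have linQ: "linear Q"
  proof (rule linearI)
    fix x y :: "real^'n" and r :: real
    show "Q (x + y) = Q x + Q y" unfolding vec_eq_iff allpi[of "\<lambda>j. Q (x + y) $ j = (Q x + Q y) $ j"]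
      by (simp add: Qc algebra_simps)
    show "Q (r *\<^sub>R x) = r *\<^sub>R Q x" unfolding vec_eq_iff allpi[of "\<lambda>j. Q (r *\<^sub>R x) $ j = (r *\<^sub>R Q x) $ j"]
      by (simp add: Qc algebra_simps)
  qed
  have orthQ: "orthogonal_transformation Q"
    unfolding orthogonal_transformation_def
  proof (intro conjI allI linQ)
    fix v w :: "real^'n"
    have "Q v \<bullet> Q w = (\<Sum>j\<in>UNIV. Q v $ j * Q w $ j)" by (simp add: inner_vec_def)
    also have "\<dots> = (\<Sum>k\<in>UNIV. Q v $ \<pi> k * Q w $ \<pi> k)" by (rule sum_reindex_bij[OF bij])
    also have "\<dots> = (\<Sum>k\<in>UNIV. v $ k * w $ k)"
      by (rule sum.cong[OF refl]) (simp add: Qc algebra_simps eps2[simplified mult.commute])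
    also have "\<dots> = v \<bullet> w" by (simp add: inner_vec_def)
    finally show "Q v \<bullet> Q w = v \<bullet> w" .
  qed
  have Hneg': "x \<in> H' \<Longrightarrow> - x \<in> H'" for x unfolding H'_def by (rule neg_closed_H)
  have BsubH': "Bset m' p' s' \<subseteq> H'" unfolding H'_def HG' by blast
  have QB: "Q x \<in> H'" if "x \<in> Bset m p s" for x
  proof -
    from that consider "x = ee m" | v where "v \<noteq> m" "x = ee (p v) + s v *\<^sub>R ee v"
      unfolding Bset_def by blast
    thus ?thesis
    proof cases
      case 1
      have "Q x = ee m'" using 1 Qe[of m] em pim by simp
      thus ?thesis using BsubH' by (auto simp: Bset_def)
    next
      case 2
      have "Q x = \<epsilon> (p v) *\<^sub>R ee (\<pi> (p v)) + (s v * \<epsilon> v) *\<^sub>R ee (\<pi> v)"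
        using 2 Qe linear_add[OF linQ] linear_scale[OF linQ] by simp
      also have "s v * \<epsilon> v = \<epsilon> (p v) * \<tau> v"
      proof -
        have "s v * s v = 1" using s[of v] by auto
        thus ?thesis using erec[OF 2(1)] unfolding c_def by (simp add: algebra_simps)
      qed
      also have "\<epsilon> (p v) *\<^sub>R ee (\<pi> (p v)) + (\<epsilon> (p v) * \<tau> v) *\<^sub>R ee (\<pi> v)
          = \<epsilon> (p v) *\<^sub>R (ee (\<pi> (p v)) + \<tau> v *\<^sub>R ee (\<pi> v))" by (simp add: scaleR_add_right)
      finally have "Q x = \<epsilon> (p v) *\<^sub>R (ee (\<pi> (p v)) + \<tau> v *\<^sub>R ee (\<pi> v))" .
      moreover have "\<epsilon> (p v) *\<^sub>R (ee (\<pi> (p v)) + \<tau> v *\<^sub>R ee (\<pi> v)) \<in> H'"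
        unfolding H'_def H_scale[OF eps[of "p v"]] using tauH[OF 2(1)] unfolding H'_def .
      ultimately show ?thesis by simp
    qed
  qed
  have QH: "Q ` H \<subseteq> H'"
  proof
    fix y assume "y \<in> Q ` H"
    then obtain x where x: "x \<in> H" "y = Q x" by blast
    from x(1) consider "x \<in> Bset m p s" | z where "z \<in> Bset m p s" "x = - z" unfolding H_def HG by blast
    thus "y \<in> H'"
    proof cases
      case 1 thus ?thesis using QB x(2) by simp
    next
      case 2
      have "y = - Q z" using 2 x(2) linear_neg[OF linQ] by simp
      thus ?thesis using Hneg' QB[OF 2(1)] by simp
    qed
  qed
  have sf: "simplex_family F" using g unfolding generates_Bn_def by blast
  have sf': "simplex_family F'" using g' unfolding generates_Bn_def by blast
  have cH: "card H = 2 * CARD('n)" unfolding H_def using card_H(1)[OF sf rz] .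
  have cH': "card H' = 2 * CARD('n)" unfolding H'_def using card_H(1)[OF sf' rz'] .
  have finH': "finite H'" using cH' by (metis card_ge_0_finite mult_pos_pos zero_less_card_finite zero_less_numeral)
  have injQ: "inj Q" using orthogonal_transformation_inj[OF orthQ] .
  have "card (Q ` H) = card H" using injQ by (simp add: card_image inj_on_subset)
  hence QHe: "Q ` H = H'" using card_subset_eq[OF finH' QH] cH cH' by simp
  have "Q ` F = F'"
  proof -
    have "Q ` F = Q ` nz ` H" using card_H(2)[OF sf rz] unfolding H_def by simp
    also have "\<dots> = nz ` Q ` H" using orth_nz[OF orthQ] by (simp add: image_image)
    also have "\<dots> = F'" using QHe card_H(2)[OF sf' rz'] unfolding H'_def by simp
    finally show ?thesis .
  qed
  thus ?thesis unfolding isometric_families_def using orthQ by blast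
qed

lemma funpow_fix: "f x = x \<Longrightarrow> (f ^^ n) x = x"
  by (induction n) auto

lemma nonparent_cycle:
  fixes E :: "'n \<Rightarrow> 'n \<Rightarrow> nat"
  assumes t: "tstruct m p d" and pe: "\<And>v. v \<noteq> m \<Longrightarrow> adj E (p v) v"
    and sym: "\<And>a b. adj E a b \<Longrightarrow> adj E b a"
    and e: "adj E u w" and uw: "u \<noteq> w" and n1: "\<not> (u \<noteq> m \<and> w = p u)" and n2: "\<not> (w \<noteq> m \<and> u = p w)"
  shows "has_cycle E"
proof -
  have pm: "p m = m" using t unfolding tstruct_def by blast
  have ex: "\<exists>i j. n = i + j \<and> (p ^^ i) u = (p ^^ j) w" if "n = d u + d w" for n
  proof -
    have "(p ^^ d u) u = m" "(p ^^ d w) w = m" using anc_m[OF t] by auto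
    thus ?thesis using that by metis
  qed
  define n0 where "n0 = (LEAST n. \<exists>i j. n = i + j \<and> (p ^^ i) u = (p ^^ j) w)"
  have "\<exists>i j. n0 = i + j \<and> (p ^^ i) u = (p ^^ j) w"
    unfolding n0_def by (rule LeastI_ex) (use ex in blast)
  then obtain i j where ij: "n0 = i + j" "(p ^^ i) u = (p ^^ j) w" by blast
  have mn: "i + j \<le> i' + j'" if "(p ^^ i') u = (p ^^ j') w" for i' j'
  proof -
    have "n0 \<le> i' + j'" unfolding n0_def by (rule Least_le) (use that in blast)
    thus ?thesis using ij(1) by simp
  qed
  have iter_m: "(p ^^ a) x = m \<Longrightarrow> a \<le> b \<Longrightarrow> (p ^^ b) x = m" for a b x
  proof -
    assume h: "(p ^^ a) x = m" "a \<le> b"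
    have e1: "(p ^^ ((b - a) + a)) x = (p ^^ (b - a)) ((p ^^ a) x)" by (simp only: funpow_add comp_apply)
    have e2: "(b - a) + a = b" using h(2) by simp
    have "(p ^^ b) x = (p ^^ (b - a)) ((p ^^ a) x)" using e1 unfolding e2 .
    thus ?thesis using h(1) funpow_fix[of p m] pm by simp
  qed
  have F1: "(p ^^ k) u \<noteq> m" if "k < i" for k
  proof
    assume h: "(p ^^ k) u = m"
    hence "(p ^^ i) u = m" using iter_m that by simp
    hence "(p ^^ k) u = (p ^^ j) w" using h ij(2) by simp
    thus False using mn that by fastforce
  qed
  have F2: "(p ^^ k) w \<noteq> m" if "k < j" for k
  proof
    assume h: "(p ^^ k) w = m"
    hence "(p ^^ j) w = m" using iter_m that by simp
    hence "(p ^^ i) u = (p ^^ k) w" using h ij(2) by simp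
    thus False using mn that by fastforce
  qed
  have anc_inj: "(p ^^ k1) x \<noteq> (p ^^ k2) x" if "k1 < k2" "(p ^^ k1) x \<noteq> m" for k1 k2 x
  proof
    assume h: "(p ^^ k1) x = (p ^^ k2) x"
    have "d ((p ^^ k1) x) \<noteq> 0" using that(2) tstruct_d0[OF t] by blast
    hence "d x > k1" using anc_d[OF t, of k1 x] by simp
    hence "d ((p ^^ k1) x) \<noteq> d ((p ^^ k2) x)" using anc_d[OF t] that(1) by simp
    thus False using h by simp
  qed
  have nonm: "adj E x (p x)" if "x \<noteq> m" for x using sym[OF pe[OF that]] .
  define g where "g k = (if k \<le> i then (p ^^ k) u else (p ^^ (i + j - k)) w)" for k
  have gk: "g k = (p ^^ (i + j - k)) w" if "i \<le> k" for k
    using that ij(2) unfolding g_def by auto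
  define vs where "vs = map g [0..<Suc (i + j)]"
  have len: "length vs = Suc (i + j)" unfolding vs_def by simp
  have nth: "vs ! k = g k" if "k < Suc (i + j)" for k unfolding vs_def using that by (simp del: upt_Suc)
  have adjk: "adj E (vs ! k) (vs ! Suc k)" if "Suc k < length vs" for k
  proof (cases "k < i")
    case True
    have "vs ! k = (p ^^ k) u" "vs ! Suc k = p ((p ^^ k) u)" using True that len nth unfolding g_def by auto
    thus ?thesis using nonm[OF F1[OF True]] by simp
  next
    case False
    define a where "a = i + j - Suc k"
    have aj: "a < j" using False that len unfolding a_def by simp
    have "vs ! Suc k = (p ^^ a) w" using gk[of "Suc k"] False that len nth unfolding a_def by simp
    moreover have "vs ! k = p ((p ^^ a) w)"
    proof -
      have "vs ! k = (p ^^ (i + j - k)) w" using gk[of k] False that len nth by simp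
      also have "i + j - k = Suc a" using False that len unfolding a_def by simp
      finally show ?thesis by simp
    qed
    ultimately show ?thesis using pe[OF F2[OF aj]] by simp
  qed
  have lst: "last vs = w"
  proof -
    have ne: "vs \<noteq> []" using len by auto
    have "last vs = vs ! (i + j)" using last_conv_nth[OF ne] len by simp
    also have "\<dots> = g (i + j)" using nth by simp
    also have "\<dots> = w" using gk[of "i + j"] by simp
    finally show ?thesis .
  qed
  have hd: "hd vs = u"
  proof -
    have ne: "vs \<noteq> []" using len by auto
    have "hd vs = vs ! 0" using hd_conv_nth[OF ne] .
    also have "\<dots> = u" using nth[of 0] unfolding g_def by simp
    finally show ?thesis .
  qed
  have ginj: "g k1 \<noteq> g k2" if "k1 < k2" "k2 \<le> i + j" for k1 k2
  proof (cases "k2 \<le> i")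
    case True
    have "(p ^^ k1) u \<noteq> m" using F1 that True by simp
    thus ?thesis using anc_inj[OF that(1)] True that unfolding g_def by simp
  next
    case F: False
    show ?thesis
    proof (cases "k1 \<le> i")
      case True
      show ?thesis
      proof
        assume "g k1 = g k2"
        hence "(p ^^ k1) u = (p ^^ (i + j - k2)) w" using True F unfolding g_def by simp
        hence "i + j \<le> k1 + (i + j - k2)" using mn by blast
        thus False using that True F by simp
      qed
    next
      case False
      have a: "i + j - k2 < i + j - k1" "i + j - k1 < j" using that False by auto
      have "(p ^^ (i + j - k2)) w \<noteq> m" using F2 a by simp
      hence "(p ^^ (i + j - k2)) w \<noteq> (p ^^ (i + j - k1)) w" using anc_inj[OF a(1)] by blast
      thus ?thesis using False F that unfolding g_def by simp
    qed
  qed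
  have dist: "distinct vs"
    unfolding vs_def distinct_map
  proof
    show "inj_on g (set [0..<Suc (i + j)])"
    proof (rule inj_onI)
      fix k1 k2 assume k: "k1 \<in> set [0..<Suc (i + j)]" "k2 \<in> set [0..<Suc (i + j)]" "g k1 = g k2"
      show "k1 = k2"
      proof (rule ccontr)
        assume "k1 \<noteq> k2"
        hence "k1 < k2 \<or> k2 < k1" by arith
        thus False using ginj k by (auto simp del: upt_Suc) (metis less_Suc_eq_le)+
      qed
    qed
  qed simp
  have l3: "length vs \<ge> 3"
  proof -
    have "i + j \<noteq> 0"
    proof
      assume "i + j = 0" thus False using ij(2) uw by simp
    qed
    moreover have "i + j \<noteq> 1"
    proof
      assume h: "i + j = 1"
      hence "(i = 1 \<and> j = 0) \<or> (i = 0 \<and> j = 1)" by arith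
      thus False
      proof
        assume h2: "i = 1 \<and> j = 0"
        have "u \<noteq> m" using F1[of 0] h2 by simp
        moreover have "w = p u" using ij(2) h2 by simp
        ultimately show False using n1 by simp
      next
        assume h2: "i = 0 \<and> j = 1"
        have "w \<noteq> m" using F2[of 0] h2 by simp
        moreover have "u = p w" using ij(2) h2 by simp
        ultimately show False using n2 by simp
      qed
    qed
    ultimately have "i + j \<ge> 2" by arith
    thus ?thesis using len by simp
  qed
  show ?thesis unfolding has_cycle_def
    using l3 dist adjk lst hd sym[OF e] by blast
qed

lemma tree_eq_PG:
  fixes E :: "'n \<Rightarrow> 'n \<Rightarrow> nat"
  assumes tr: "is_tree E" and t: "tstruct m p d" and pe: "\<And>v. v \<noteq> m \<Longrightarrow> adj E (p v) v"
  shows "E = PG m p"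
proof (intro ext)
  fix i j
  have Es: "E a b = E b a" for a b using tr unfolding is_tree_def by blast
  have sym: "adj E a b \<Longrightarrow> adj E b a" for a b unfolding adj_def using Es by simp
  have le: "E i j \<le> 1" using tr unfolding is_tree_def by blast
  have nc: "\<not> has_cycle E" using tr unfolding is_tree_def by blast
  show "E i j = PG m p i j"
  proof (cases "(i \<noteq> m \<and> j = p i) \<or> (j \<noteq> m \<and> i = p j)")
    case True
    hence "adj E i j"
    proof
      assume h: "i \<noteq> m \<and> j = p i"
      hence "adj E (p i) i" using pe by blast
      thus ?thesis using h sym by simp
    next
      assume h: "j \<noteq> m \<and> i = p j"
      hence "adj E (p j) j" using pe by blast
      thus ?thesis using h by simp
    qed
    hence "E i j = 1" using le unfolding adj_def by simp
    thus ?thesis using True unfolding PG_def by simp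
  next
    case False
    have "E i j = 0"
    proof (rule ccontr)
      assume "E i j \<noteq> 0"
      hence a: "adj E i j" unfolding adj_def by simp
      have "i \<noteq> j" using a tr unfolding is_tree_def adj_def by auto
      hence "has_cycle E" using nonparent_cycle[OF t pe sym a] False by blast
      thus False using nc by blast
    qed
    thus ?thesis using False unfolding PG_def by simp
  qed
qed

lemma T_apply:
  assumes "c \<noteq> e"
  shows "reflection (ee c - ee e) (ee k) = (if k = c then ee e else if k = e then ee c else ee k)"
  using refl_ee2[OF assms, of 1 "-1" k] by simp

lemma T_apply2:
  shows "reflection (ee c - ee e) (ee a - ee b) = reflection (ee c - ee e) (ee a) - reflection (ee c - ee e) (ee b)"
  by (rule linear_diff[OF linear_reflection])

lemma gen_all:
  fixes S :: "(real^'n) set"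
  assumes t: "tstruct m p d" and BS: "\<And>x. x \<in> Bset m p (\<lambda>_. -1) \<Longrightarrow> reflection x \<in> refl_group S"
  shows "W \<subseteq> refl_group S"
proof -
  let ?R = "refl_group S"
  define T where "T a b = reflection (ee a - ee b)" for a b :: 'n
  have Tpar: "T (p v) v \<in> ?R" if "v \<noteq> m" for v
  proof -
    have "ee (p v) + (-1) *\<^sub>R ee v \<in> Bset m p (\<lambda>_. -1)" using that unfolding Bset_def by blast
    thus ?thesis using BS unfolding T_def by simp
  qed
  have Tm: "T m v \<in> ?R" if "v \<noteq> m" for v
    using that
  proof (induction "d v" arbitrary: v rule: less_induct)
    case less
    show ?case
    proof (cases "p v = m")
      case True thus ?thesis using Tpar[OF less.prems] by simp
    next
      case False
      have "d (p v) < d v" using t less.prems unfolding tstruct_def by simp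
      hence ih: "T m (p v) \<in> ?R" using less False by blast
      have pv: "p v \<noteq> v" using tstruct_pne[OF t less.prems] .
      have "reflection (T (p v) v (ee m - ee (p v))) \<in> ?R"
        using rg_conj[OF Tpar[OF less.prems] ih[unfolded T_def]] unfolding T_def .
      moreover have "T (p v) v (ee m - ee (p v)) = ee m - ee v"
        unfolding T_def T_apply2 T_apply[OF pv] using False less.prems pv by auto
      ultimately show ?thesis unfolding T_def by simp
    qed
  qed
  have Tall: "T a b \<in> ?R" if "a \<noteq> b" for a b
  proof (cases "a = m")
    case True thus ?thesis using Tm that by simp
  next
    case am: False
    show ?thesis
    proof (cases "b = m")
      case True
      have "T a b = T m a" unfolding T_def
        using reflection_neg[of "ee m - ee a"] True by (simp add: algebra_simps)
      thus ?thesis using Tm[OF am] by simp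
    next
      case bm: False
      have "reflection (T m a (ee m - ee b)) \<in> ?R"
        using rg_conj[OF Tm[OF am] Tm[OF bm, unfolded T_def]] unfolding T_def .
      moreover have "T m a (ee m - ee b) = ee a - ee b"
        unfolding T_def T_apply2 T_apply[OF am[symmetric]] using am bm that by auto
      ultimately show ?thesis unfolding T_def by simp
    qed
  qed
  have Sm: "reflection (ee m) \<in> ?R" using BS[of "ee m"] by (simp add: Bset_def)
  have Sall: "reflection (ee a) \<in> ?R" for a
  proof (cases "a = m")
    case True thus ?thesis using Sm by simp
  next
    case False
    have "reflection (T m a (ee m)) \<in> ?R" using rg_conj[OF Tm[OF False] Sm] .
    moreover have "T m a (ee m) = ee a" unfolding T_def using T_apply[of m a m] False by auto
    ultimately show ?thesis by simp
  qed
  have Pall: "reflection (1 *\<^sub>R ee a + 1 *\<^sub>R ee b) \<in> ?R" if "a \<noteq> b" for a b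
  proof -
    have "reflection (reflection (ee b) (ee a - ee b)) \<in> ?R"
      using rg_conj[OF Sall[of b] Tall[OF that, unfolded T_def]] .
    moreover have "reflection (ee b) (ee a - ee b) = 1 *\<^sub>R ee a + 1 *\<^sub>R ee b"
    proof -
      have "reflection (ee b) (ee a - ee b) = reflection (ee b) (ee a) - reflection (ee b) (ee b)"
        by (rule linear_diff[OF linear_reflection])
      also have "\<dots> = ee a + ee b" using that by (simp add: refl_ee)
      finally show ?thesis by simp
    qed
    ultimately show ?thesis by simp
  qed
  have "reflection r \<in> ?R" if "r \<in> Bn_roots" for r
    using that
  proof (cases rule: root_cases)
    case (s i a)
    hence "reflection r = reflection (ee i)" using reflection_scale[of a "ee i"] by auto
    thus ?thesis using Sall by simp
  next
    case (l i j a b)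
    have ab: "a * a = 1" "a \<noteq> 0" using l by auto
    have r: "r = a *\<^sub>R (1 *\<^sub>R ee i + (a * b) *\<^sub>R ee j)" using l(4) ab by (simp add: algebra_simps)
    have "reflection r = reflection (1 *\<^sub>R ee i + (a * b) *\<^sub>R ee j)" using r reflection_scale ab(2) by metis
    moreover have "a * b = 1 \<or> a * b = -1" using l by auto
    ultimately show ?thesis using Pall[OF l(1)] Tall[OF l(1)] unfolding T_def by auto
  qed
  thus ?thesis using rg_subset by blast
qed

lemma dim_vec_UNIV: "dim (UNIV :: (real^'n) set) = CARD('n)"
  by simp

lemma part5:
  fixes E :: "'n::finite \<Rightarrow> 'n \<Rightarrow> nat"
  assumes mt: "marked_tree_one E M"
  shows "\<exists>(F :: (real^'n) set) G. generates_Bn F \<and> realizes F G \<and>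
           marked_iso (Bn_edges G) (Bn_marked G) E M"
proof -
  have tr: "is_tree E" using mt unfolding marked_tree_one_def by blast
  obtain m where M: "M = {m}" using mt unfolding marked_tree_one_def by (auto simp: card_1_singleton_iff)
  have conn: "(adj E)\<^sup>*\<^sup>* m j" for j using tr unfolding is_tree_def by blast
  obtain p d where t: "tstruct m p d" and pe0: "\<forall>v. v \<noteq> m \<longrightarrow> adj E (p v) v"
    using bfs[of "adj E" m, OF conn] by blast
  have pe: "\<And>v. v \<noteq> m \<Longrightarrow> adj E (p v) v" using pe0 by blast
  have EPG: "E = PG m p" using tree_eq_PG[OF tr t pe] .
  define s1 where "s1 = (\<lambda>_::'n. -1::real)"
  have s1: "\<And>v. s1 v \<in> {1,-1}" by (simp add: s1_def)
  define B where "B = Bset m p s1"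
  define G0 where "G0 = B \<union> uminus ` B"
  define F0 where "F0 = nz ` G0"
  define b where "b i = (if i = m then 1 *\<^sub>R ee m else 1 *\<^sub>R ee (p i) + (-1) *\<^sub>R ee i)" for i
  have Bb: "B = range b"
  proof
    show "B \<subseteq> range b"
    proof
      fix x assume "x \<in> B"
      then consider "x = ee m" | v where "v \<noteq> m" "x = ee (p v) + s1 v *\<^sub>R ee v"
        unfolding B_def Bset_def by blast
      thus "x \<in> range b"
      proof cases
        case 1 thus ?thesis using rangeI[of b m] by (simp add: b_def)
      next
        case 2 thus ?thesis using rangeI[of b v] by (simp add: b_def s1_def)
      qed
    qed
    show "range b \<subseteq> B" unfolding B_def Bset_def b_def s1_def by auto
  qed
  have bR: "b i \<in> Bn_roots" for i
  proof (cases "i = m")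
    case True thus ?thesis using root_s[of 1 m] by (simp add: b_def)
  next
    case False
    have "p i \<noteq> i" using tstruct_pne[OF t False] .
    thus ?thesis using root_l[of "p i" i 1 "-1"] False by (simp add: b_def)
  qed
  have BR: "B \<subseteq> Bn_roots" using bR Bb by auto
  have G0R: "G0 \<subseteq> Bn_roots" unfolding G0_def using BR root_neg by auto
  have rz: "realizes F0 G0" unfolding realizes_nz F0_def using G0R by simp
  have binj: "inj b"
  proof (rule injI)
    fix i j assume e: "b i = b j"
    show "i = j"
    proof (cases "i = m")
      case True
      show ?thesis
      proof (rule ccontr)
        assume "i \<noteq> j"
        hence jm: "j \<noteq> m" using True by simp
        have "1 *\<^sub>R ee m = 1 *\<^sub>R ee (p j) + (-1) *\<^sub>R ee j" using e True jm by (simp add: b_def)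
        thus False using one_two[of "p j" j 1 "-1" 1 m] tstruct_pne[OF t jm] by simp
      qed
    next
      case im: False
      show ?thesis
      proof (cases "j = m")
        case True
        have "1 *\<^sub>R ee m = 1 *\<^sub>R ee (p i) + (-1) *\<^sub>R ee i" using e True im by (simp add: b_def)
        thus ?thesis using one_two[of "p i" i 1 "-1" 1 m] tstruct_pne[OF t im] by simp
      next
        case jm: False
        have "1 *\<^sub>R ee (p i) + (-1) *\<^sub>R ee i = 1 *\<^sub>R ee (p j) + (-1) *\<^sub>R ee j" using e im jm by (simp add: b_def)
        from two_eq[OF tstruct_pne[OF t im] tstruct_pne[OF t jm] _ _ _ _ this]
        show ?thesis by simp
      qed
    qed
  qed
  define f where "f i = nz (b i)" for i
  have finj: "inj f"
  proof (rule injI)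
    fix i j assume "f i = f j"
    hence "b i = b j" using nz_inj[OF bR bR] unfolding f_def by blast
    thus "i = j" using binj by (simp add: inj_eq)
  qed
  have fn: "norm (f i) = 1" for i unfolding f_def using norm_nz root_nonzero[OF bR] by blast
  have rf: "range f = nz ` B" unfolding f_def Bb by (simp add: image_image)
  have F0f: "F0 = range f \<union> uminus ` range f"
    unfolding F0_def G0_def rf image_Un image_image by (simp add: nz_neg)
  have spanf: "span (range f) = UNIV"
  proof -
    have "span ((\<lambda>x. (1 / norm x) *\<^sub>R x) ` B) = span B"
      using BR root_nonzero by (intro span_image_scale) (auto simp: B_def finite_Bset)
    thus ?thesis using span_Bset[OF t s1] rf unfolding nz_def B_def by simp
  qed
  have indep: "independent (range f)"
  proof -
    have "card (range f) = CARD('n)" using finj by (simp add: card_image)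
    hence "card (range f) = dim (UNIV :: (real^'n) set)" by simp
    hence "independent (range f) \<longleftrightarrow> UNIV \<subseteq> span (range f)"
      by (intro card_eq_dim) auto
    thus ?thesis using spanf by simp
  qed
  have sf: "simplex_family F0" unfolding simplex_family_def using fn finj indep F0f by blast
  have RGW: "refl_group F0 = W"
  proof
    show "refl_group F0 \<subseteq> W" by (rule realized_sub_W[OF rz])
    show "W \<subseteq> refl_group F0"
    proof (rule gen_all[OF t])
      fix x assume "x \<in> Bset m p (\<lambda>_. -1)"
      hence xB: "x \<in> B" unfolding B_def s1_def .
      hence "nz x \<in> F0" unfolding F0_def G0_def by blast
      hence "reflection (nz x) \<in> refl_group F0" by (rule rg_refl)
      moreover have "norm x \<noteq> 0" using root_nonzero BR xB by auto
      ultimately show "reflection x \<in> refl_group F0"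
        using reflection_scale[of "1 / norm x" x] by (simp add: nz_def)
    qed
  qed
  have gen: "generates_Bn F0"
  proof -
    have "(\<lambda>g. id \<circ> g \<circ> inv id) ` W = (W :: (real^'n \<Rightarrow> real^'n) set)" by (simp add: inv_id)
    moreover have "orthogonal_transformation (id :: real^'n \<Rightarrow> real^'n)" by (simp add: id_def)
    ultimately show ?thesis unfolding generates_Bn_def using sf RGW by metis
  qed
  have EG: "Bn_edges G0 = E" unfolding G0_def B_def EPG using edges_B[OF t s1] .
  have MG: "Bn_marked G0 = M" unfolding G0_def B_def M using marked_B[OF t s1] .
  have "marked_iso (Bn_edges G0) (Bn_marked G0) E M"
    unfolding marked_iso_def EG MG by (intro exI[of _ id]) simp
  thus ?thesis using gen rz by blast
qed

theorem theorem2: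
  assumes "CARD('n) \<ge> 2"
  shows
    
    "(\<forall>(F :: (real^'n) set). generates_Bn F \<longrightarrow>
        (\<exists>F' G. isometric_families F F' \<and> realizes F' G))
   \<and> 
    (\<forall>(F :: (real^'n) set) G. generates_Bn F \<and> realizes F G \<longrightarrow>
        marked_tree_one (Bn_edges G) (Bn_marked G))
   \<and> 
    (\<forall>(F :: (real^'n) set) F' G G'. generates_Bn F \<and> isometric_families F F' \<and>
        realizes F G \<and> realizes F' G' \<longrightarrow>
        marked_iso (Bn_edges G) (Bn_marked G) (Bn_edges G') (Bn_marked G'))
   \<and> 
    (\<forall>(F :: (real^'n) set) F' G G'. generates_Bn F \<and> generates_Bn F' \<and>
        realizes F G \<and> realizes F' G' \<and>
        marked_iso (Bn_edges G) (Bn_marked G) (Bn_edges G') (Bn_marked G') \<longrightarrow>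
        isometric_families F F')
   \<and> 
    (\<forall>(E :: 'n \<Rightarrow> 'n \<Rightarrow> nat) M. marked_tree_one E M \<longrightarrow>
        (\<exists>(F :: (real^'n) set) G. generates_Bn F \<and> realizes F G \<and>
           marked_iso (Bn_edges G) (Bn_marked G) E M))"
proof (intro conjI allI impI)
  fix F :: "(real^'n) set"
  assume "generates_Bn F"
  thus "\<exists>F' G. isometric_families F F' \<and> realizes F' G" by (rule part1)
next
  fix F :: "(real^'n) set" and G
  assume h: "generates_Bn F \<and> realizes F G"
  show "marked_tree_one (Bn_edges G) (Bn_marked G)" using part2 h by blast
next
  fix F :: "(real^'n) set" and F' G G'
  assume h: "generates_Bn F \<and> isometric_families F F' \<and> realizes F G \<and> realizes F' G'"
  show "marked_iso (Bn_edges G) (Bn_marked G) (Bn_edges G') (Bn_marked G')"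
    using part3[OF assms] h by blast
next
  fix F :: "(real^'n) set" and F' G G'
  assume h: "generates_Bn F \<and> generates_Bn F' \<and> realizes F G \<and> realizes F' G' \<and>
        marked_iso (Bn_edges G) (Bn_marked G) (Bn_edges G') (Bn_marked G')"
  show "isometric_families F F'" using part4 h by blast
next
  fix E :: "'n \<Rightarrow> 'n \<Rightarrow> nat" and M
  assume "marked_tree_one E M"
  thus "\<exists>(F :: (real^'n) set) G. generates_Bn F \<and> realizes F G \<and>
           marked_iso (Bn_edges G) (Bn_marked G) E M" by (rule part5)
qed

end
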